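(* Assume $(\mathcal A_2)$ and let $\omega>0$, $z_0\in L^2(\Omega)$. Then for all $0<h<h_0$, the solution $\tilde z_h:[0,\infty)\to V_h$ of $\langle\tilde z_h'(t),\phi_h\rangle+e^{-\omega t}\langle\tilde z_h(t)\,\mathbf v\cdot\nabla\tilde z_h(t),\phi_h\rangle=\langle(\mathcal A_{\omega_h}-\mathcal B_h\mathcal B_h^*\mathcal P_h)\tilde z_h(t),\phi_h\rangle$ for all $\phi_h\in V_h$, $t>0$, with $\tilde z_h(0)=\pi_hz_0$, satisfies $\|\tilde z_h(t)\|\le Ce^{-\omega_Pt}\|z_0\|$ for all $t\ge0$, with $C>0$ independent of $h$.
   Context: Let $\Omega\subset\mathbb R^d$, $d\in\{1,2,3\}$, be a bounded open domain with smooth boundary; $L^2(\Omega)$ is the Hilbert space with $\langle\phi,\psi\rangle=\int_\Omega\phi\bar\psi\,dx$ and norm $\|\cdot\|$ (functions in the discrete problem are real-valued). Fix $\eta>0$, $\mathbf v\in\mathbb R^d$, $\nu_0\in\mathbb R$, $f_s\in L^2(\Omega)$, a nonempty open set $\mathcal O\subset\Omega$ with indicator $\chi_{\mathcal O}$, and $y_s\in H^2(\Omega)\cap H^1_0(\Omega)$ solving $-\eta\Delta y_s+y_s\,\mathbf v\cdot\nabla y_s+\nu_0y_s=f_s$, $y_s=0$ on $\partial\Omega$. Let $s_0$ be the constant of $H^1(\Omega)\hookrightarrow L^4(\Omega)$, $C_a$ the Agmon constant ($\|z\|_{L^\infty}\le C_a\|z\|_{H^1}^{1/2}\|z\|_{H^2}^{1/2}$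 on $H^2\cap H^1_0$), and assume $\hat\nu:=\nu_0-\frac{|\mathbf v|^2}{\eta}(C_a^2+s_0^4)\|y_s\|_{H^2(\Omega)}^2>0$. $\mathcal Bu=\chi_{\mathcal O}u$. Let $a(z,\phi)=\eta\langle\nabla z,\nabla\phi\rangle+\langle y_s\mathbf v\cdot\nabla z,\phi\rangle+\langle(\mathbf v\cdot\nabla y_s)z,\phi\rangle+\nu_0\langle z,\phi\rangle$. For $h>0$, $V_h\subset H^1_0(\Omega)$ is a conforming finite element space on a triangulation of $\bar\Omega$ of mesh size $h$, $\pi_h$ the $L^2$-orthogonal projection onto $V_h$ (satisfying $\|v-\pi_hv\|\le Ch^2\|v\|_{H^2}$, $\|\nabla(v-\pi_hv)\|\le Ch\|v\|_{H^2}$ on $H^2\cap H^1_0$); $\mathcal A_h:V_h\to V_h$, $\langle-\mathcal A_hz_h,\phi_h\rangle=a(z_h,\phi_h)$; $\mathcal A_{\omega_h}=\mathcal A_h+\omega I_h$; $\mathcal B_h=\pi_h\mathcal B$. There exist $h_0>0$, $\omega_P>0$, $M_P>0$ such that for $0<h<h_0$ the discrete Riccati equation $\mathcal A_{\omega_h}^*\mathcal P_h+\mathcal P_h\mathcal A_{\omega_h}-\mathcal P_h\mathcal B_h\mathcal B_h^*\mathcal P_h+I_h=0$ has a unique self-adjoint nonnegative solution $\mathcal P_h\in\mathcal L(V_h)$ and $\|e^{t(\mathcal A_{\omega_h}-\mathcal B_h\mathcal B_h^*\mathcal P_h)}\|_{\mathcal L(V_h)}\le M_Pe^{-\omega_Pt}$.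 Assumption $(\mathcal A_2)$: $\Re\langle(\mathcal A_{\omega_h}-\mathcal B_h\mathcal B_h^*\mathcal P_h)\phi_h,\phi_h\rangle\le-\omega_P\|\phi_h\|^2$ for all $\phi_h\in V_h$ and all $0<h<h_0$. *)

theory Defs
  imports "HOL-Analysis.Analysis"
begin

definition L2 :: "(real^'d) set \<Rightarrow> (real^'d \<Rightarrow> real) \<Rightarrow> bool" where
  "L2 \<Omega> f \<longleftrightarrow> f \<in> borel_measurable (lebesgue_on \<Omega>) \<and>
     integrable (lebesgue_on \<Omega>) (\<lambda>x. (f x)\<^sup>2)"

definition ip :: "(real^'d) set \<Rightarrow> (real^'d \<Rightarrow> real) \<Rightarrow> (real^'d \<Rightarrow> real) \<Rightarrow> real" where
  "ip \<Omega> f g = integral\<^sup>L (lebesgue_on \<Omega>) (\<lambda>x. f x * g x)"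

definition nrm :: "(real^'d) set \<Rightarrow> (real^'d \<Rightarrow> real) \<Rightarrow> real" where
  "nrm \<Omega> f = sqrt (ip \<Omega> f f)"

definition pd :: "'d \<Rightarrow> (real^'d \<Rightarrow> real) \<Rightarrow> real^'d \<Rightarrow> real" where
  "pd i f x = frechet_derivative f (at x) (axis i 1)"

fun pds :: "'d list \<Rightarrow> (real^'d \<Rightarrow> real) \<Rightarrow> real^'d \<Rightarrow> real" where
  "pds [] f = f"
| "pds (i # is) f = pd i (pds is f)"

definition smooth_on :: "(real^'d) set \<Rightarrow> (real^'d \<Rightarrow> real) \<Rightarrow> bool" where
  "smooth_on U f \<longleftrightarrow> (\<forall>is. pds is f differentiable_on U)"

definition smooth_boundary :: "(real^'d) set \<Rightarrow> bool" where
  "smooth_boundary \<Omega> \<longleftrightarrow> (\<forall>x\<in>frontier \<Omega>. \<exists>U \<psi>. open U \<and> x \<in> U \<and> smooth_on U \<psi> \<and>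
      (\<forall>y\<in>U. frechet_derivative \<psi> (at y) \<noteq> (\<lambda>_. 0)) \<and> \<Omega> \<inter> U = {y\<in>U. \<psi> y < 0})"

definition test_fun :: "(real^'d) set \<Rightarrow> (real^'d \<Rightarrow> real) \<Rightarrow> bool" where
  "test_fun \<Omega> \<phi> \<longleftrightarrow> smooth_on UNIV \<phi> \<and> compact (closure {x. \<phi> x \<noteq> 0}) \<and>
      closure {x. \<phi> x \<noteq> 0} \<subseteq> \<Omega>"

definition is_wgrad :: "(real^'d) set \<Rightarrow> (real^'d \<Rightarrow> real) \<Rightarrow> ('d \<Rightarrow> real^'d \<Rightarrow> real) \<Rightarrow> bool" where
  "is_wgrad \<Omega> f G \<longleftrightarrow> L2 \<Omega> f \<and> (\<forall>i. L2 \<Omega> (G i) \<and>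
      (\<forall>\<phi>. test_fun \<Omega> \<phi> \<longrightarrow> ip \<Omega> f (pd i \<phi>) = - ip \<Omega> (G i) \<phi>))"

definition H1 :: "(real^'d) set \<Rightarrow> (real^'d \<Rightarrow> real) \<Rightarrow> bool" where
  "H1 \<Omega> f \<longleftrightarrow> (\<exists>G. is_wgrad \<Omega> f G)"

definition wgrad :: "(real^'d) set \<Rightarrow> (real^'d \<Rightarrow> real) \<Rightarrow> 'd \<Rightarrow> real^'d \<Rightarrow> real" where
  "wgrad \<Omega> f = (SOME G. is_wgrad \<Omega> f G)"

definition H10 :: "(real^'d) set \<Rightarrow> (real^'d \<Rightarrow> real) \<Rightarrow> bool" where
  "H10 \<Omega> f \<longleftrightarrow> H1 \<Omega> f \<and> (\<exists>\<phi>s. (\<forall>n. test_fun \<Omega> (\<phi>s n)) \<and>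
      (\<lambda>n. nrm \<Omega> (\<lambda>x. \<phi>s n x - f x)) \<longlonglongrightarrow> 0 \<and>
      (\<forall>i. (\<lambda>n. nrm \<Omega> (\<lambda>x. pd i (\<phi>s n) x - wgrad \<Omega> f i x)) \<longlonglongrightarrow> 0))"

definition H2 :: "(real^'d) set \<Rightarrow> (real^'d \<Rightarrow> real) \<Rightarrow> bool" where
  "H2 \<Omega> f \<longleftrightarrow> H1 \<Omega> f \<and> (\<forall>i. H1 \<Omega> (wgrad \<Omega> f i))"

definition H1norm :: "(real^'d) set \<Rightarrow> (real^'d \<Rightarrow> real) \<Rightarrow> real" where
  "H1norm \<Omega> f = sqrt ((nrm \<Omega> f)\<^sup>2 + (\<Sum>i\<in>UNIV. (nrm \<Omega> (wgrad \<Omega> f i))\<^sup>2))"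

definition H2norm :: "(real^'d) set \<Rightarrow> (real^'d \<Rightarrow> real) \<Rightarrow> real" where
  "H2norm \<Omega> f = sqrt ((nrm \<Omega> f)\<^sup>2 + (\<Sum>i\<in>UNIV. (nrm \<Omega> (wgrad \<Omega> f i))\<^sup>2)
      + (\<Sum>i\<in>UNIV. \<Sum>j\<in>UNIV. (nrm \<Omega> (wgrad \<Omega> (wgrad \<Omega> f i) j))\<^sup>2))"

definition L4norm :: "(real^'d) set \<Rightarrow> (real^'d \<Rightarrow> real) \<Rightarrow> real" where
  "L4norm \<Omega> f = (integral\<^sup>L (lebesgue_on \<Omega>) (\<lambda>x. (f x) ^ 4)) powr (1/4)"

definition vgrad :: "(real^'d) set \<Rightarrow> real^'d \<Rightarrow> (real^'d \<Rightarrow> real) \<Rightarrow> real^'d \<Rightarrow> real" where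
  "vgrad \<Omega> v z x = (\<Sum>i\<in>UNIV. v $ i * wgrad \<Omega> z i x)"

definition a_form :: "(real^'d) set \<Rightarrow> real \<Rightarrow> real^'d \<Rightarrow> real \<Rightarrow> (real^'d \<Rightarrow> real)
    \<Rightarrow> (real^'d \<Rightarrow> real) \<Rightarrow> (real^'d \<Rightarrow> real) \<Rightarrow> real" where
  "a_form \<Omega> \<eta> v \<nu>0 ys z \<phi> =
     \<eta> * (\<Sum>i\<in>UNIV. ip \<Omega> (wgrad \<Omega> z i) (wgrad \<Omega> \<phi> i))
   + ip \<Omega> (\<lambda>x. ys x * vgrad \<Omega> v z x) \<phi>
   + ip \<Omega> (\<lambda>x. vgrad \<Omega> v ys x * z x) \<phi>
   + \<nu>0 * ip \<Omega> z \<phi>"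

definition fspan :: "(real^'d \<Rightarrow> real) set \<Rightarrow> (real^'d \<Rightarrow> real) set" where
  "fspan Bs = {(\<lambda>x. \<Sum>b\<in>Bs. c b * b x) | c. True}"

definition proj :: "(real^'d) set \<Rightarrow> (real^'d \<Rightarrow> real) set \<Rightarrow> (real^'d \<Rightarrow> real) \<Rightarrow> real^'d \<Rightarrow> real" where
  "proj \<Omega> V f = (SOME u. u \<in> V \<and> (\<forall>\<phi>\<in>V. ip \<Omega> (\<lambda>x. f x - u x) \<phi> = 0))"

definition Ah :: "(real^'d) set \<Rightarrow> (real^'d \<Rightarrow> real) set
    \<Rightarrow> ((real^'d \<Rightarrow> real) \<Rightarrow> (real^'d \<Rightarrow> real) \<Rightarrow> real) \<Rightarrow> (real^'d \<Rightarrow> real) \<Rightarrow> real^'d \<Rightarrow> real" where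
  "Ah \<Omega> V a z = (SOME u. u \<in> V \<and> (\<forall>\<phi>\<in>V. - ip \<Omega> u \<phi> = a z \<phi>))"

definition Vadj :: "(real^'d) set \<Rightarrow> (real^'d \<Rightarrow> real) set
    \<Rightarrow> ((real^'d \<Rightarrow> real) \<Rightarrow> (real^'d \<Rightarrow> real)) \<Rightarrow> (real^'d \<Rightarrow> real) \<Rightarrow> real^'d \<Rightarrow> real" where
  "Vadj \<Omega> V T z = (SOME u. u \<in> V \<and> (\<forall>\<phi>\<in>V. ip \<Omega> u \<phi> = ip \<Omega> z (T \<phi>)))"

definition Bh :: "(real^'d) set \<Rightarrow> (real^'d \<Rightarrow> real) set \<Rightarrow> (real^'d) set
    \<Rightarrow> (real^'d \<Rightarrow> real) \<Rightarrow> real^'d \<Rightarrow> real" where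
  "Bh \<Omega> V Obs u = proj \<Omega> V (\<lambda>x. indicator Obs x * u x)"

definition Bh_adj :: "(real^'d) set \<Rightarrow> (real^'d \<Rightarrow> real) set \<Rightarrow> (real^'d) set
    \<Rightarrow> (real^'d \<Rightarrow> real) \<Rightarrow> real^'d \<Rightarrow> real" where
  "Bh_adj \<Omega> V Obs z = (SOME u. L2 \<Omega> u \<and> (\<forall>f. L2 \<Omega> f \<longrightarrow> ip \<Omega> u f = ip \<Omega> z (Bh \<Omega> V Obs f)))"

definition Aw :: "(real^'d) set \<Rightarrow> (real^'d \<Rightarrow> real) set
    \<Rightarrow> ((real^'d \<Rightarrow> real) \<Rightarrow> (real^'d \<Rightarrow> real) \<Rightarrow> real) \<Rightarrow> real \<Rightarrow> (real^'d \<Rightarrow> real) \<Rightarrow> real^'d \<Rightarrow> real" where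
  "Aw \<Omega> V a \<omega> z = (\<lambda>x. Ah \<Omega> V a z x + \<omega> * z x)"

definition closed_loop :: "(real^'d) set \<Rightarrow> (real^'d \<Rightarrow> real) set
    \<Rightarrow> ((real^'d \<Rightarrow> real) \<Rightarrow> (real^'d \<Rightarrow> real) \<Rightarrow> real) \<Rightarrow> real \<Rightarrow> (real^'d) set
    \<Rightarrow> ((real^'d \<Rightarrow> real) \<Rightarrow> (real^'d \<Rightarrow> real)) \<Rightarrow> (real^'d \<Rightarrow> real) \<Rightarrow> real^'d \<Rightarrow> real" where
  "closed_loop \<Omega> V a \<omega> Obs P z = (\<lambda>x. Aw \<Omega> V a \<omega> z x - Bh \<Omega> V Obs (Bh_adj \<Omega> V Obs (P z)) x)"

definition riccati_res :: "(real^'d) set \<Rightarrow> (real^'d \<Rightarrow> real) set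
    \<Rightarrow> ((real^'d \<Rightarrow> real) \<Rightarrow> (real^'d \<Rightarrow> real) \<Rightarrow> real) \<Rightarrow> real \<Rightarrow> (real^'d) set
    \<Rightarrow> ((real^'d \<Rightarrow> real) \<Rightarrow> (real^'d \<Rightarrow> real)) \<Rightarrow> (real^'d \<Rightarrow> real) \<Rightarrow> real^'d \<Rightarrow> real" where
  "riccati_res \<Omega> V a \<omega> Obs P z = (\<lambda>x. Vadj \<Omega> V (Aw \<Omega> V a \<omega>) (P z) x + P (Aw \<Omega> V a \<omega> z) x
      - P (Bh \<Omega> V Obs (Bh_adj \<Omega> V Obs (P z))) x + z x)"

end

theory Submission
  imports Defs "HOL-Computational_Algebra.Polynomial"
begin


lemma L2_iff: "L2 \<Omega> f \<longleftrightarrow> f \<in> borel_measurable (lebesgue_on \<Omega>) \<and> integrable (lebesgue_on \<Omega>) (\<lambda>x. (f x)\<^sup>2)"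
  by (simp add: L2_def)

lemma L2_meas: "L2 \<Omega> f \<Longrightarrow> f \<in> borel_measurable (lebesgue_on \<Omega>)"
  by (simp add: L2_def)

lemma L2_sq: "L2 \<Omega> f \<Longrightarrow> integrable (lebesgue_on \<Omega>) (\<lambda>x. (f x)\<^sup>2)"
  by (simp add: L2_def)

lemma two_abs: fixes a b :: real shows "2 * \<bar>a * b\<bar> \<le> a\<^sup>2 + b\<^sup>2"
proof -
  have "0 \<le> (\<bar>a\<bar> - \<bar>b\<bar>)\<^sup>2" by simp
  then show ?thesis by (simp add: power2_eq_square algebra_simps abs_mult)
qed

lemma L2_prod_int:
  assumes "L2 \<Omega> f" "L2 \<Omega> g"
  shows "integrable (lebesgue_on \<Omega>) (\<lambda>x. f x * g x)"
proof (rule Bochner_Integration.integrable_bound)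
  show "integrable (lebesgue_on \<Omega>) (\<lambda>x. (f x)\<^sup>2 + (g x)\<^sup>2)"
    using assms by (auto simp: L2_def)
  show "(\<lambda>x. f x * g x) \<in> borel_measurable (lebesgue_on \<Omega>)"
    using assms by (auto simp: L2_def)
  show "AE x in lebesgue_on \<Omega>. norm (f x * g x) \<le> norm ((f x)\<^sup>2 + (g x)\<^sup>2)"
  proof (rule AE_I2)
    fix x
    have "2 * \<bar>f x * g x\<bar> \<le> (f x)\<^sup>2 + (g x)\<^sup>2" by (rule two_abs)
    then show "norm (f x * g x) \<le> norm ((f x)\<^sup>2 + (g x)\<^sup>2)" by simp
  qed
qed

lemma L2_lin:
  assumes "L2 \<Omega> f" "L2 \<Omega> g"
  shows "L2 \<Omega> (\<lambda>x. a * f x + b * g x)"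
proof -
  have i1: "integrable (lebesgue_on \<Omega>) (\<lambda>x. f x * g x)" using L2_prod_int assms .
  have "integrable (lebesgue_on \<Omega>) (\<lambda>x. a\<^sup>2 * (f x)\<^sup>2 + b\<^sup>2 * (g x)\<^sup>2 + 2*a*b*(f x * g x))"
    using assms i1 by (auto simp: L2_def)
  moreover have "(\<lambda>x. a\<^sup>2 * (f x)\<^sup>2 + b\<^sup>2 * (g x)\<^sup>2 + 2*a*b*(f x * g x)) = (\<lambda>x. (a * f x + b * g x)\<^sup>2)"
    by (auto simp: power2_eq_square algebra_simps)
  ultimately show ?thesis using assms by (auto simp: L2_def)
qed

lemma L2_zero: "L2 \<Omega> (\<lambda>x. 0)" by (simp add: L2_def)

lemma L2_add: "L2 \<Omega> f \<Longrightarrow> L2 \<Omega> g \<Longrightarrow> L2 \<Omega> (\<lambda>x. f x + g x)"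
  using L2_lin[of \<Omega> f g 1 1] by simp
lemma L2_diff: "L2 \<Omega> f \<Longrightarrow> L2 \<Omega> g \<Longrightarrow> L2 \<Omega> (\<lambda>x. f x - g x)"
  using L2_lin[of \<Omega> f g 1 "-1"] by simp
lemma L2_scale: "L2 \<Omega> f \<Longrightarrow> L2 \<Omega> (\<lambda>x. c * f x)"
  using L2_lin[of \<Omega> f f c 0] by simp

lemma L2_sum: "finite B \<Longrightarrow> (\<And>b. b \<in> B \<Longrightarrow> L2 \<Omega> (F b)) \<Longrightarrow> L2 \<Omega> (\<lambda>x. \<Sum>b\<in>B. F b x)"
proof (induction B rule: finite_induct)
  case empty then show ?case by (simp add: L2_zero)
next
  case (insert b B)
  then show ?case by (simp add: L2_add)
qed

lemma ip_sym: "ip \<Omega> f g = ip \<Omega> g f"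
  by (simp add: ip_def mult.commute)

lemma ip_lin1:
  assumes "L2 \<Omega> f" "L2 \<Omega> g" "L2 \<Omega> h"
  shows "ip \<Omega> (\<lambda>x. a * f x + b * g x) h = a * ip \<Omega> f h + b * ip \<Omega> g h"
proof -
  have "ip \<Omega> (\<lambda>x. a * f x + b * g x) h = integral\<^sup>L (lebesgue_on \<Omega>) (\<lambda>x. a * (f x * h x) + b * (g x * h x))"
    unfolding ip_def by (simp add: algebra_simps)
  also have "\<dots> = a * ip \<Omega> f h + b * ip \<Omega> g h"
    unfolding ip_def using L2_prod_int[OF assms(1,3)] L2_prod_int[OF assms(2,3)] by simp
  finally show ?thesis .
qed

lemma ip_lin2:
  assumes "L2 \<Omega> f" "L2 \<Omega> g" "L2 \<Omega> h"
  shows "ip \<Omega> h (\<lambda>x. a * f x + b * g x) = a * ip \<Omega> h f + b * ip \<Omega> h g"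
  using ip_lin1[OF assms] by (simp add: ip_sym)

lemma ip_add1: "L2 \<Omega> f \<Longrightarrow> L2 \<Omega> g \<Longrightarrow> L2 \<Omega> h \<Longrightarrow> ip \<Omega> (\<lambda>x. f x + g x) h = ip \<Omega> f h + ip \<Omega> g h"
  using ip_lin1[of \<Omega> f g h 1 1] by simp
lemma ip_diff1: "L2 \<Omega> f \<Longrightarrow> L2 \<Omega> g \<Longrightarrow> L2 \<Omega> h \<Longrightarrow> ip \<Omega> (\<lambda>x. f x - g x) h = ip \<Omega> f h - ip \<Omega> g h"
  using ip_lin1[of \<Omega> f g h 1 "-1"] by simp
lemma ip_add2: "L2 \<Omega> f \<Longrightarrow> L2 \<Omega> g \<Longrightarrow> L2 \<Omega> h \<Longrightarrow> ip \<Omega> h (\<lambda>x. f x + g x) = ip \<Omega> h f + ip \<Omega> h g"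
  using ip_lin2[of \<Omega> f g h 1 1] by simp
lemma ip_diff2: "L2 \<Omega> f \<Longrightarrow> L2 \<Omega> g \<Longrightarrow> L2 \<Omega> h \<Longrightarrow> ip \<Omega> h (\<lambda>x. f x - g x) = ip \<Omega> h f - ip \<Omega> h g"
  using ip_lin2[of \<Omega> f g h 1 "-1"] by simp
lemma ip_scale1: "ip \<Omega> (\<lambda>x. c * f x) h = c * ip \<Omega> f h"
  by (simp add: ip_def mult.assoc)
lemma ip_scale2: "ip \<Omega> h (\<lambda>x. c * f x) = c * ip \<Omega> h f"
  by (simp add: ip_def algebra_simps)

lemma ip_nonneg: "ip \<Omega> f f \<ge> 0"
  unfolding ip_def
  apply (rule integral_nonneg_AE)
  apply (rule AE_I2)
  by simp

lemma nrm_sq: "(nrm \<Omega> f)\<^sup>2 = ip \<Omega> f f"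
  by (simp add: nrm_def ip_nonneg)

lemma nrm_nonneg: "nrm \<Omega> f \<ge> 0" by (simp add: nrm_def ip_nonneg)

lemma ip_ff: "ip \<Omega> f f = integral\<^sup>L (lebesgue_on \<Omega>) (\<lambda>x. (f x)\<^sup>2)"
  by (simp add: ip_def power2_eq_square)

lemma CS:
  assumes "L2 \<Omega> f" "L2 \<Omega> g"
  shows "\<bar>ip \<Omega> f g\<bar> \<le> nrm \<Omega> f * nrm \<Omega> g"
proof -
  have q: "0 \<le> ip \<Omega> f f * t\<^sup>2 + 2 * ip \<Omega> f g * t + ip \<Omega> g g" for t
  proof -
    have a: "0 \<le> ip \<Omega> (\<lambda>x. t * f x + 1 * g x) (\<lambda>x. t * f x + 1 * g x)" by (rule ip_nonneg)
    have b: "ip \<Omega> (\<lambda>x. t * f x + 1 * g x) (\<lambda>x. t * f x + 1 * g x) = t * ip \<Omega> f (\<lambda>x. t * f x + 1 * g x) + 1 * ip \<Omega> g (\<lambda>x. t * f x + 1 * g x)"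
      by (rule ip_lin1[OF assms L2_lin[OF assms]])
    have c: "ip \<Omega> f (\<lambda>x. t * f x + 1 * g x) = t * ip \<Omega> f f + 1 * ip \<Omega> f g"
      by (rule ip_lin2[OF assms assms(1)])
    have d: "ip \<Omega> g (\<lambda>x. t * f x + 1 * g x) = t * ip \<Omega> g f + 1 * ip \<Omega> g g"
      by (rule ip_lin2[OF assms assms(2)])
    have e: "ip \<Omega> g f = ip \<Omega> f g" by (rule ip_sym)
    from a b c d e show ?thesis by (simp add: power2_eq_square algebra_simps)
  qed
  have "(ip \<Omega> f g)\<^sup>2 \<le> ip \<Omega> f f * ip \<Omega> g g"
  proof (cases "ip \<Omega> f f = 0")
    case True
    have "ip \<Omega> f g = 0"
    proof (rule ccontr)
      assume ne: "ip \<Omega> f g \<noteq> 0"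
      define t where "t = - (ip \<Omega> g g + 1) / (2 * ip \<Omega> f g)"
      have "2 * ip \<Omega> f g * t = - (ip \<Omega> g g + 1)" using ne by (simp add: t_def)
      with q[of t] True show False by simp
    qed
    then show ?thesis using ip_nonneg[of \<Omega> f] ip_nonneg[of \<Omega> g] by simp
  next
    case False
    then have pos: "ip \<Omega> f f > 0" using ip_nonneg[of \<Omega> f] by simp
    define t where "t = - ip \<Omega> f g / ip \<Omega> f f"
    have "0 \<le> ip \<Omega> f f * t\<^sup>2 + 2 * ip \<Omega> f g * t + ip \<Omega> g g" by (rule q)
    also have "\<dots> = ip \<Omega> g g - (ip \<Omega> f g)\<^sup>2 / ip \<Omega> f f"
      using pos by (simp add: t_def power2_eq_square field_simps)
    finally show ?thesis using pos by (simp add: field_simps)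
  qed
  then have "sqrt ((ip \<Omega> f g)\<^sup>2) \<le> sqrt (ip \<Omega> f f * ip \<Omega> g g)"
    by (rule real_sqrt_le_mono)
  then have "\<bar>ip \<Omega> f g\<bar> \<le> sqrt (ip \<Omega> f f * ip \<Omega> g g)" by simp
  then show ?thesis by (simp add: nrm_def real_sqrt_mult)
qed

lemma nrm_triangle:
  assumes "L2 \<Omega> f" "L2 \<Omega> g"
  shows "nrm \<Omega> (\<lambda>x. f x + g x) \<le> nrm \<Omega> f + nrm \<Omega> g"
proof -
  have "(nrm \<Omega> (\<lambda>x. f x + g x))\<^sup>2 = ip \<Omega> f f + 2 * ip \<Omega> f g + ip \<Omega> g g"
    using assms L2_add[OF assms] by (simp add: nrm_sq ip_add1 ip_add2 ip_sym[of \<Omega> g f])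
  also have "\<dots> \<le> (nrm \<Omega> f)\<^sup>2 + 2 * (nrm \<Omega> f * nrm \<Omega> g) + (nrm \<Omega> g)\<^sup>2"
    using CS[OF assms] by (simp add: nrm_sq)
  also have "\<dots> = (nrm \<Omega> f + nrm \<Omega> g)\<^sup>2" by (simp add: power2_eq_square algebra_simps)
  finally show ?thesis
    using nrm_nonneg[of \<Omega>] by (meson add_nonneg_nonneg power2_le_imp_le)
qed

lemma nrm_scale: "nrm \<Omega> (\<lambda>x. c * f x) = \<bar>c\<bar> * nrm \<Omega> f"
proof -
  have "ip \<Omega> (\<lambda>x. c * f x) (\<lambda>x. c * f x) = c\<^sup>2 * ip \<Omega> f f"
    by (simp add: ip_scale1 ip_scale2 power2_eq_square)
  then show ?thesis by (simp add: nrm_def real_sqrt_mult)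
qed

lemma nrm_diff_sym: "nrm \<Omega> (\<lambda>x. f x - g x) = nrm \<Omega> (\<lambda>x. g x - f x)"
  unfolding nrm_def ip_def by (simp add: algebra_simps)

lemma nrm_triangle_diff:
  assumes "L2 \<Omega> f" "L2 \<Omega> g" "L2 \<Omega> h"
  shows "nrm \<Omega> (\<lambda>x. f x - h x) \<le> nrm \<Omega> (\<lambda>x. f x - g x) + nrm \<Omega> (\<lambda>x. g x - h x)"
  using nrm_triangle[OF L2_diff[OF assms(1,2)] L2_diff[OF assms(2,3)]] by simp

lemma nrm_rev_triangle:
  assumes "L2 \<Omega> f" "L2 \<Omega> g"
  shows "\<bar>nrm \<Omega> f - nrm \<Omega> g\<bar> \<le> nrm \<Omega> (\<lambda>x. f x - g x)"
proof -
  have "nrm \<Omega> f \<le> nrm \<Omega> (\<lambda>x. f x - g x) + nrm \<Omega> g"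
    using nrm_triangle[OF L2_diff[OF assms] assms(2)] by simp
  moreover have "nrm \<Omega> g \<le> nrm \<Omega> (\<lambda>x. f x - g x) + nrm \<Omega> f"
    using nrm_triangle[OF L2_diff[OF assms(2,1)] assms(1)] nrm_diff_sym[of \<Omega> g f] by simp
  ultimately show ?thesis by linarith
qed



section \<open>Smooth functions\<close>

abbreviation Dif :: "(real^'d \<Rightarrow> real) \<Rightarrow> bool" where
  "Dif f \<equiv> (\<forall>x. f differentiable (at x))"

lemma smooth_on_UNIV: "smooth_on UNIV f \<longleftrightarrow> (\<forall>is. Dif (pds is f))"
  by (simp add: smooth_on_def differentiable_on_def)

lemma pd_eq: "(f has_derivative f') (at x) \<Longrightarrow> pd i f x = f' (axis i 1)"
  unfolding pd_def using frechet_derivative_at by metis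

lemma diff_has_der: "f differentiable (at x) \<Longrightarrow> (f has_derivative frechet_derivative f (at x)) (at x)"
  using frechet_derivative_works by blast

lemma pd_add:
  assumes "f differentiable (at x)" "g differentiable (at x)"
  shows "pd i (\<lambda>y. f y + g y) x = pd i f x + pd i g x"
proof -
  have "((\<lambda>y. f y + g y) has_derivative (\<lambda>h. frechet_derivative f (at x) h + frechet_derivative g (at x) h)) (at x)"
    using diff_has_der[OF assms(1)] diff_has_der[OF assms(2)] by (rule has_derivative_add)
  from pd_eq[OF this, of i] show ?thesis by (simp add: pd_def)
qed

lemma pd_scale:
  assumes "f differentiable (at x)"
  shows "pd i (\<lambda>y. c * f y) x = c * pd i f x"
proof -
  have "((\<lambda>y. c * f y) has_derivative (\<lambda>h. c * frechet_derivative f (at x) h)) (at x)"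
    using diff_has_der[OF assms] by (rule has_derivative_mult_right)
  from pd_eq[OF this, of i] show ?thesis by (simp add: pd_def)
qed

lemma pd_mult:
  assumes "f differentiable (at x)" "g differentiable (at x)"
  shows "pd i (\<lambda>y. f y * g y) x = pd i f x * g x + f x * pd i g x"
proof -
  have "((\<lambda>y. f y * g y) has_derivative (\<lambda>h. f x * frechet_derivative g (at x) h + frechet_derivative f (at x) h * g x)) (at x)"
    using diff_has_der[OF assms(1)] diff_has_der[OF assms(2)] by (rule has_derivative_mult)
  from pd_eq[OF this, of i] show ?thesis by (simp add: pd_def)
qed

lemma pd_const: "pd i (\<lambda>y. c) x = 0"
  by (simp add: pd_def)

lemma pds_append: "pds (is @ js) f = pds is (pds js f)"
  by (induction "is") auto

lemma smooth_pd: "smooth_on UNIV f \<Longrightarrow> smooth_on UNIV (pd i f)"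
  unfolding smooth_on_UNIV
proof
  fix "is"
  assume "\<forall>is. Dif (pds is f)"
  then have "Dif (pds (is @ [i]) f)" by blast
  then show "Dif (pds is (pd i f))" by (simp add: pds_append)
qed

lemma smooth_Dif: "smooth_on UNIV f \<Longrightarrow> Dif f"
  unfolding smooth_on_UNIV by (metis pds.simps(1))

lemma pds_add_gen:
  assumes "\<And>js. length js < length is \<Longrightarrow> Dif (pds js F) \<and> Dif (pds js G)"
  shows "pds is (\<lambda>x. F x + G x) = (\<lambda>x. pds is F x + pds is G x)"
  using assms
proof (induction "is")
  case Nil then show ?case by simp
next
  case (Cons i "is")
  have IH: "pds is (\<lambda>x. F x + G x) = (\<lambda>x. pds is F x + pds is G x)"
    using Cons.IH Cons.prems by force
  have d: "Dif (pds is F)" "Dif (pds is G)" using Cons.prems[of "is"] by auto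
  show ?case using d by (simp add: IH pd_add)
qed

lemma smooth_add:
  assumes "smooth_on UNIV f" "smooth_on UNIV g"
  shows "smooth_on UNIV (\<lambda>x. f x + g x)"
proof -
  have e: "pds is (\<lambda>x. f x + g x) = (\<lambda>x. pds is f x + pds is g x)" for "is"
    using assms by (intro pds_add_gen) (auto simp: smooth_on_UNIV)
  show ?thesis unfolding smooth_on_UNIV e using assms
    by (auto simp: smooth_on_UNIV intro: differentiable_add)
qed

lemma pds_scale:
  assumes "smooth_on UNIV f"
  shows "pds is (\<lambda>x. c * f x) = (\<lambda>x. c * pds is f x)"
proof (induction "is")
  case Nil then show ?case by simp
next
  case (Cons i "is")
  have "Dif (pds is f)" using assms by (simp add: smooth_on_UNIV)
  then show ?case by (simp add: Cons.IH pd_scale)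
qed

lemma smooth_scale:
  assumes "smooth_on UNIV f"
  shows "smooth_on UNIV (\<lambda>x. c * f x)"
  using assms unfolding smooth_on_UNIV pds_scale[OF assms]
  by (auto intro: differentiable_mult differentiable_const)

lemma pds_zero: "pds is (\<lambda>x. 0) = (\<lambda>x. 0)"
  by (induction "is") (auto simp: pd_const)

lemma smooth_zero: "smooth_on UNIV (\<lambda>x. 0)"
  unfolding smooth_on_UNIV pds_zero by simp

lemma smooth_sum:
  "finite B \<Longrightarrow> (\<And>b. b \<in> B \<Longrightarrow> smooth_on UNIV (F b)) \<Longrightarrow> smooth_on UNIV (\<lambda>x. \<Sum>b\<in>B. F b x)"
proof (induction B rule: finite_induct)
  case empty then show ?case by (simp add: smooth_zero)
next
  case (insert b B)
  then show ?case by (simp add: smooth_add)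
qed

lemma smooth_mult_aux:
  fixes n :: nat
  shows "\<forall>(is::'d::finite list) (f::real^'d \<Rightarrow> real) (g::real^'d \<Rightarrow> real). length is \<le> n \<longrightarrow> smooth_on UNIV f \<longrightarrow> smooth_on UNIV g \<longrightarrow> Dif (pds is (\<lambda>x. f x * g x))"
proof (induction n)
  case 0
  show ?case
  proof (rule allI, rule allI, rule allI, intro impI)
    fix "is" :: "'d list" and f g :: "real^'d \<Rightarrow> real"
    assume "length is \<le> 0" "smooth_on UNIV f" "smooth_on UNIV g"
    then show "Dif (pds is (\<lambda>x. f x * g x))"
      using smooth_Dif by (auto intro: differentiable_mult)
  qed
next
  case (Suc n)
  show ?case
  proof (rule allI, rule allI, rule allI, intro impI)
    fix "is" :: "'d list" and f g :: "real^'d \<Rightarrow> real"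
    assume len: "length is \<le> Suc n" and sf: "smooth_on UNIV f" and sg: "smooth_on UNIV g"
    show "Dif (pds is (\<lambda>x. f x * g x))"
    proof (cases "length is \<le> n")
      case True then show ?thesis using Suc.IH sf sg by blast
    next
      case False
      then have "is \<noteq> []" by auto
      then obtain js i where isd: "is = js @ [i]" by (metis rev_exhaust)
      with len have lj: "length js \<le> n" by simp
      have sf': "smooth_on UNIV (pd i f)" and sg': "smooth_on UNIV (pd i g)"
        using sf sg smooth_pd by auto
      have pdfg: "pd i (\<lambda>x. f x * g x) = (\<lambda>x. pd i f x * g x + f x * pd i g x)"
        using smooth_Dif[OF sf] smooth_Dif[OF sg] by (auto simp: pd_mult)
      have "pds is (\<lambda>x. f x * g x) = pds js (\<lambda>x. pd i f x * g x + f x * pd i g x)"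
        by (simp add: isd pds_append pdfg)
      also have "\<dots> = (\<lambda>x. pds js (\<lambda>x. pd i f x * g x) x + pds js (\<lambda>x. f x * pd i g x) x)"
        by (rule pds_add_gen) (use Suc.IH sf sg sf' sg' lj in auto)
      finally have e: "pds is (\<lambda>x. f x * g x) = (\<lambda>x. pds js (\<lambda>x. pd i f x * g x) x + pds js (\<lambda>x. f x * pd i g x) x)" .
      have "Dif (pds js (\<lambda>x. pd i f x * g x))" "Dif (pds js (\<lambda>x. f x * pd i g x))"
        using Suc.IH sf sg sf' sg' lj by auto
      then show ?thesis unfolding e by (auto intro: differentiable_add)
    qed
  qed
qed

lemma smooth_mult:
  assumes "smooth_on UNIV f" "smooth_on UNIV g"
  shows "smooth_on UNIV (\<lambda>x. f x * g x)"
  unfolding smooth_on_UNIV using smooth_mult_aux assms by blast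

lemma smooth_prod:
  fixes F :: "'b \<Rightarrow> real^'d::finite \<Rightarrow> real"
  shows "finite B \<Longrightarrow> (\<And>b. b \<in> B \<Longrightarrow> smooth_on UNIV (F b)) \<Longrightarrow> smooth_on UNIV (\<lambda>x. \<Prod>b\<in>B. F b x)"
proof (induction B rule: finite_induct)
  case empty
  have "smooth_on UNIV (\<lambda>x::real^'d. 1::real)"
  proof -
    have "pds is (\<lambda>x::real^'d. 1::real) = (if is = [] then (\<lambda>x. 1) else (\<lambda>x. 0))" for "is"
    proof (induction "is")
      case Nil then show ?case by simp
    next
      case (Cons i "is") then show ?case by (cases "is = []") (auto simp: pd_const)
    qed
    then show ?thesis unfolding smooth_on_UNIV by simp
  qed
  then show ?case by simp
next
  case (insert b B)
  then show ?case by (simp add: smooth_mult)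
qed

definition smooth1 :: "(nat \<Rightarrow> real \<Rightarrow> real) \<Rightarrow> bool" where
  "smooth1 F \<longleftrightarrow> (\<forall>k t. (F k has_real_derivative F (Suc k) t) (at t))"

lemma coord_has_der:
  "((\<lambda>x::real^'d. a * x $ j + b) has_derivative (\<lambda>h. a * h $ j)) (at x)"
proof -
  have "((\<lambda>h::real^'d. h $ j) has_derivative (\<lambda>h. h $ j)) (at x)"
    by (rule bounded_linear_imp_has_derivative[OF bounded_linear_vec_nth])
  then have "((\<lambda>h::real^'d. a * h $ j) has_derivative (\<lambda>h. a * h $ j)) (at x)"
    by (rule has_derivative_mult_right)
  then show ?thesis by (intro has_derivative_eq_rhs[OF has_derivative_add_const]) auto
qed

lemma comp1_has_der:
  assumes "smooth1 F"
  shows "((\<lambda>x::real^'d. c * F k (a * x $ j + b)) has_derivative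
           (\<lambda>h. c * (F (Suc k) (a * x $ j + b) * (a * h $ j)))) (at x)"
proof -
  have "(F k has_derivative (\<lambda>u. F (Suc k) (a * x $ j + b) * u)) (at (a * x $ j + b))"
    using assms unfolding smooth1_def has_field_derivative_def by blast
  from has_derivative_compose[OF coord_has_der this]
  have "((\<lambda>x::real^'d. F k (a * x $ j + b)) has_derivative (\<lambda>h. F (Suc k) (a * x $ j + b) * (a * h $ j))) (at x)" .
  then show ?thesis by (rule has_derivative_mult_right)
qed

lemma pds_comp1:
  assumes "smooth1 F"
  shows "pds is (\<lambda>x::real^'d. c * F k (a * x $ j + b)) =
    (\<lambda>x. (c * (\<Prod>l\<leftarrow>is. (if l = j then a else 0))) * F (k + length is) (a * x $ j + b))"
proof (induction "is")
  case Nil then show ?case by simp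
next
  case (Cons i "is")
  show ?case
  proof
    fix x :: "real^'d"
    have "pds (i # is) (\<lambda>x::real^'d. c * F k (a * x $ j + b)) x =
        pd i (\<lambda>x. (c * (\<Prod>l\<leftarrow>is. (if l = j then a else 0))) * F (k + length is) (a * x $ j + b)) x"
      by (simp add: Cons.IH)
    also have "\<dots> = (c * (\<Prod>l\<leftarrow>is. (if l = j then a else 0))) * (F (Suc (k + length is)) (a * x $ j + b) * (a * axis i 1 $ j))"
      by (rule pd_eq[OF comp1_has_der[OF assms]])
    also have "\<dots> = (c * (\<Prod>l\<leftarrow>i # is. (if l = j then a else 0))) * F (k + length (i # is)) (a * x $ j + b)"
      by (auto simp: axis_def)
    finally show "pds (i # is) (\<lambda>x::real^'d. c * F k (a * x $ j + b)) x = (c * (\<Prod>l\<leftarrow>i # is. (if l = j then a else 0))) * F (k + length (i # is)) (a * x $ j + b)" .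
  qed
qed

lemma smooth_comp1:
  assumes "smooth1 F"
  shows "smooth_on UNIV (\<lambda>x::real^'d. F k (a * x $ j + b))"
proof -
  have "Dif (pds is (\<lambda>x::real^'d. 1 * F k (a * x $ j + b)))" for "is"
  proof
    fix x :: "real^'d"
    show "pds is (\<lambda>x::real^'d. 1 * F k (a * x $ j + b)) differentiable (at x)"
      unfolding pds_comp1[OF assms] differentiable_def
      using comp1_has_der[OF assms, of "1 * (\<Prod>l\<leftarrow>is. (if l = j then a else 0))" "k + length is" a j b x] by blast
  qed
  then show ?thesis unfolding smooth_on_UNIV by simp
qed



section \<open>The smooth function exp(-1/t)\<close>

primrec bP :: "nat \<Rightarrow> real poly" where
  "bP 0 = 1"
| "bP (Suc k) = [:0, 0, 1:] * (bP k - pderiv (bP k))"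

definition bG :: "nat \<Rightarrow> real \<Rightarrow> real" where
  "bG k t = (if t > 0 then poly (bP k) (1 / t) * exp (- (1 / t)) else 0)"

lemma poly_exp_lim: "((\<lambda>u. u ^ n * poly q u * exp (- u)) \<longlongrightarrow> (0::real)) at_top"
proof (induction q arbitrary: n)
  case (pCons a q)
  have e: "u ^ n * poly (pCons a q) u * exp (- u) = a * (u ^ n / exp u) + u ^ Suc n * poly q u * exp (- u)" for u :: real
    by (simp add: exp_minus field_simps)
  have "((\<lambda>u. a * (u ^ n / exp u) + u ^ Suc n * poly q u * exp (- u)) \<longlongrightarrow> a * 0 + 0) at_top"
    by (intro tendsto_intros tendsto_power_div_exp_0 pCons.IH)
  then show ?case unfolding e by simp
qed simp

lemma bG_pos_der:
  assumes "t > 0"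
  shows "((\<lambda>t. poly p (1 / t) * exp (- (1 / t))) has_real_derivative
     poly ([:0, 0, 1:] * (p - pderiv p)) (1 / t) * exp (- (1 / t))) (at t)"
proof -
  have d1: "((\<lambda>t. 1 / t) has_real_derivative (- 1 / t\<^sup>2)) (at t)"
    using assms by (auto intro!: derivative_eq_intros simp: power2_eq_square field_simps)
  have d2: "((\<lambda>t. poly p (1 / t)) has_real_derivative poly (pderiv p) (1 / t) * (- 1 / t\<^sup>2)) (at t)"
    by (rule DERIV_chain2[OF poly_DERIV d1])
  have d3: "((\<lambda>t. exp (- (1 / t))) has_real_derivative exp (- (1 / t)) * (- (- 1 / t\<^sup>2))) (at t)"
    by (rule DERIV_chain2[OF DERIV_exp]) (intro derivative_intros d1)
  have "((\<lambda>t. poly p (1 / t) * exp (- (1 / t))) has_real_derivative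
     poly (pderiv p) (1 / t) * (- 1 / t\<^sup>2) * exp (- (1 / t)) + poly p (1 / t) * (exp (- (1 / t)) * (- (- 1 / t\<^sup>2)))) (at t)"
    using DERIV_mult[OF d2 d3] by (simp add: mult_ac)
  moreover have "poly (pderiv p) (1 / t) * (- 1 / t\<^sup>2) * exp (- (1 / t)) + poly p (1 / t) * (exp (- (1 / t)) * (- (- 1 / t\<^sup>2)))
      = poly ([:0, 0, 1:] * (p - pderiv p)) (1 / t) * exp (- (1 / t))"
    using assms by (simp add: power2_eq_square divide_simps) (simp add: algebra_simps)
  ultimately show ?thesis by simp
qed

lemma bG_der: "(bG k has_real_derivative bG (Suc k) t) (at t)"
proof (cases "t > 0")
  case True
  have "((\<lambda>t. poly (bP k) (1 / t) * exp (- (1 / t))) has_real_derivative bG (Suc k) t) (at t)"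
    using bG_pos_der[OF True, of "bP k"] True by (simp add: bG_def)
  then show ?thesis
    by (rule has_field_derivative_transform_within_open[where S="{0<..}"]) (use True in \<open>auto simp: bG_def\<close>)
next
  case False
  show ?thesis
  proof (cases "t < 0")
    case True
    have "((\<lambda>t. 0) has_real_derivative 0) (at t)" by simp
    then have "(bG k has_real_derivative 0) (at t)"
      by (rule has_field_derivative_transform_within_open[where S="{..<0}"]) (use True in \<open>auto simp: bG_def\<close>)
    then show ?thesis using True by (simp add: bG_def)
  next
    case False
    with \<open>\<not> t > 0\<close> have t0: "t = 0" by simp
    have "((\<lambda>h. (bG k (0 + h) - bG k 0) / h) \<longlongrightarrow> 0) (at 0)"
      unfolding filterlim_at_split
    proof
      have "((\<lambda>h. 0::real) \<longlongrightarrow> 0) (at_left 0)" by simp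
      then show "((\<lambda>h. (bG k (0 + h) - bG k 0) / h) \<longlongrightarrow> 0) (at_left 0)"
        by (rule Lim_transform_eventually) (auto simp: bG_def eventually_at_left_field intro: exI[of _ "-1"])
    next
      have "((\<lambda>u. u ^ 1 * poly (bP k) u * exp (- u)) \<longlongrightarrow> (0::real)) at_top"
        by (rule poly_exp_lim)
      then have "((\<lambda>x. (bG k (0 + inverse x) - bG k 0) / inverse x) \<longlongrightarrow> 0) at_top"
        by (rule Lim_transform_eventually)
          (auto simp: bG_def eventually_at_top_dense divide_inverse mult_ac intro!: exI[of _ 0])
      then show "((\<lambda>h. (bG k (0 + h) - bG k 0) / h) \<longlongrightarrow> 0) (at_right 0)"
        unfolding filterlim_at_right_to_top by simp
    qed
    then have "(bG k has_real_derivative 0) (at 0)" by (simp add: DERIV_def)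
    then show ?thesis using t0 by (simp add: bG_def)
  qed
qed

lemma smooth1_bG: "smooth1 bG"
  unfolding smooth1_def using bG_der by blast

lemma bG0: "bG 0 t = (if t > 0 then exp (- (1 / t)) else 0)"
  by (simp add: bG_def)

lemma bG0_bounds: "0 \<le> bG 0 t" "bG 0 t \<le> 1"
  by (auto simp: bG0)

lemma bG0_lim: "t > 0 \<Longrightarrow> (\<lambda>n. bG 0 (real n * t)) \<longlonglongrightarrow> 1"
proof -
  assume t: "t > 0"
  have "((\<lambda>n. exp (- (1 / t) * inverse (real n))) \<longlonglongrightarrow> exp (- (1 / t) * 0))"
    by (intro tendsto_intros lim_inverse_n)
  then have "((\<lambda>n. exp (- (1 / t) * inverse (real n))) \<longlonglongrightarrow> 1)" by simp
  then show ?thesis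
  proof (rule Lim_transform_eventually)
    show "\<forall>\<^sub>F n in sequentially. exp (- (1 / t) * inverse (real n)) = bG 0 (real n * t)"
      using t by (auto simp: bG0 eventually_sequentially field_simps intro!: exI[of _ 1])
  qed
qed

lemma bG0_zero: "t \<le> 0 \<Longrightarrow> bG 0 t = 0"
  by (simp add: bG0)



definition supp :: "(real^'d \<Rightarrow> real) \<Rightarrow> (real^'d) set" where
  "supp f = closure {x. f x \<noteq> 0}"

lemma not_supp: "x \<notin> supp f \<Longrightarrow> f x = 0"
proof (rule ccontr)
  assume a: "x \<notin> supp f" "f x \<noteq> 0"
  then have "x \<in> {x. f x \<noteq> 0}" by simp
  then have "x \<in> supp f" unfolding supp_def using closure_subset by (rule subsetD[rotated])
  with a show False by simp
qed

lemma Dif_cont: "Dif f \<Longrightarrow> continuous_on UNIV f"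
  by (simp add: continuous_at_imp_continuous_on differentiable_imp_continuous_within)

lemma pd_out_supp:
  assumes "Dif f" "x \<notin> supp f"
  shows "pd i f x = 0"
proof -
  have "frechet_derivative f (at x) = frechet_derivative (\<lambda>y. 0) (at x)"
    by (rule frechet_derivative_transform_within_open[where X="- supp f"])
       (use assms in \<open>auto simp: supp_def intro: not_supp\<close>)
  then show ?thesis by (simp add: pd_def)
qed

lemma supp_pd: "Dif f \<Longrightarrow> supp (pd i f) \<subseteq> supp f"
  unfolding supp_def[of "pd i f"]
  by (rule closure_minimal) (auto intro: pd_out_supp simp: supp_def)

lemma cs_bounded:
  assumes "continuous_on UNIV f" "compact (supp f)"
  shows "\<exists>M. \<forall>x. \<bar>f x\<bar> \<le> M"
proof -
  have "compact (f ` supp f)"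
    using assms by (auto intro: compact_continuous_image continuous_on_subset)
  then obtain M where "\<forall>y\<in>f ` supp f. norm y \<le> M"
    using compact_imp_bounded bounded_iff by metis
  have "\<bar>f x\<bar> \<le> max M 0" for x
  proof (cases "x \<in> supp f")
    case True
    then show ?thesis using \<open>\<forall>y\<in>f ` supp f. norm y \<le> M\<close> by fastforce
  next
    case False
    then show ?thesis using not_supp[OF False] by simp
  qed
  then show ?thesis by blast
qed

lemma dir_der:
  fixes f :: "real^'d \<Rightarrow> real"
  assumes "Dif f"
  shows "((\<lambda>s. f (x + s *\<^sub>R axis i 1)) has_real_derivative pd i f (x + s *\<^sub>R axis i 1)) (at s)"
proof -
  let ?v = "axis i 1 :: real^'d"
  have l: "((\<lambda>s. x + s *\<^sub>R ?v) has_derivative (\<lambda>h. h *\<^sub>R ?v)) (at s)"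
    by (auto intro!: derivative_eq_intros)
  have "(f has_derivative frechet_derivative f (at (x + s *\<^sub>R ?v))) (at (x + s *\<^sub>R ?v))"
    using assms diff_has_der by blast
  from has_derivative_compose[OF l this]
  have d: "((\<lambda>s. f (x + s *\<^sub>R ?v)) has_derivative (\<lambda>h. frechet_derivative f (at (x + s *\<^sub>R ?v)) (h *\<^sub>R ?v))) (at s)" .
  have lin: "linear (frechet_derivative f (at (x + s *\<^sub>R ?v)))"
    using assms diff_has_der has_derivative_linear by blast
  have "(\<lambda>h. frechet_derivative f (at (x + s *\<^sub>R ?v)) (h *\<^sub>R ?v)) = (\<lambda>h. pd i f (x + s *\<^sub>R ?v) * h)"
    using linear_scale[OF lin] by (auto simp: pd_def)
  with d show ?thesis by (simp add: has_field_derivative_def)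
qed

lemma diff_bound:
  fixes f :: "real^'d \<Rightarrow> real"
  assumes "Dif f" "\<forall>y. \<bar>pd i f y\<bar> \<le> M"
  shows "\<bar>f (x + t *\<^sub>R axis i 1) - f x\<bar> \<le> M * \<bar>t\<bar>"
proof -
  let ?g = "\<lambda>s. f (x + s *\<^sub>R axis i 1)"
  have der: "\<And>s. (?g has_real_derivative pd i f (x + s *\<^sub>R axis i 1)) (at s)"
    using dir_der[OF assms(1)] .
  consider "t = 0" | "t > 0" | "t < 0" by linarith
  then show ?thesis
  proof cases
    case 1 then show ?thesis by simp
  next
    case 2
    obtain z where "?g t - ?g 0 = (t - 0) * pd i f (x + z *\<^sub>R axis i 1)"
      using MVT2[OF 2 der] by blast
    then have "\<bar>?g t - ?g 0\<bar> = \<bar>t\<bar> * \<bar>pd i f (x + z *\<^sub>R axis i 1)\<bar>" by (simp add: abs_mult)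
    also have "\<dots> \<le> \<bar>t\<bar> * M" using assms(2) by (intro mult_left_mono) auto
    finally show ?thesis by (simp add: mult.commute)
  next
    case 3
    obtain z where "?g 0 - ?g t = (0 - t) * pd i f (x + z *\<^sub>R axis i 1)"
      using MVT2[OF 3 der] by blast
    then have "?g t - ?g 0 = t * pd i f (x + z *\<^sub>R axis i 1)" by simp
    then have "\<bar>?g t - ?g 0\<bar> = \<bar>t\<bar> * \<bar>pd i f (x + z *\<^sub>R axis i 1)\<bar>" by (simp add: abs_mult)
    also have "\<dots> \<le> \<bar>t\<bar> * M" using assms(2) by (intro mult_left_mono) auto
    finally show ?thesis by (simp add: mult.commute)
  qed
qed

lemma cont_borel: "continuous_on UNIV f \<Longrightarrow> f \<in> borel_measurable lborel"
  using borel_measurable_continuous_onI by simp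

lemma cs_integrable:
  fixes f :: "real^'d \<Rightarrow> real"
  assumes "continuous_on UNIV f" "compact (supp f)"
  shows "integrable lborel f"
proof -
  have "integrable lborel (\<lambda>x. indicator (supp f) x *\<^sub>R f x)"
    using assms by (intro borel_integrable_compact) (auto intro: continuous_on_subset)
  moreover have "(\<lambda>x. indicator (supp f) x *\<^sub>R f x) = f"
    using not_supp by (fastforce simp: indicator_def)
  ultimately show ?thesis by simp
qed

lemma integral_translate:
  fixes f :: "real^'d \<Rightarrow> real"
  assumes "f \<in> borel_measurable lborel"
  shows "integral\<^sup>L lborel (\<lambda>x. f (c + x)) = integral\<^sup>L lborel f"
proof -
  have m: "(+) c \<in> measurable lborel (borel :: (real^'d) measure)"
    by (simp add: borel_measurable_continuous_onI continuous_on_add continuous_on_const continuous_on_id)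
  have mf: "f \<in> borel_measurable borel" using assms by simp
  have "integral\<^sup>L lborel f = integral\<^sup>L (distr lborel borel ((+) c)) f"
    by (simp add: lborel_distr_plus)
  also have "\<dots> = integral\<^sup>L lborel (\<lambda>x. f (c + x))"
    by (rule integral_distr[OF m mf])
  finally show ?thesis by simp
qed

lemma integrable_translate:
  fixes f :: "real^'d \<Rightarrow> real"
  assumes "integrable lborel f"
  shows "integrable lborel (\<lambda>x. f (c + x))"
proof -
  have m: "(+) c \<in> measurable lborel (borel :: (real^'d) measure)"
    by (simp add: borel_measurable_continuous_onI continuous_on_add continuous_on_const continuous_on_id)
  have mf: "f \<in> borel_measurable borel" using assms borel_measurable_integrable by simp
  have "integrable (distr lborel borel ((+) c)) f"
    using assms by (simp add: lborel_distr_plus)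
  then show ?thesis
    using integrable_distr_eq[OF m mf] by simp
qed

lemma IBP0:
  fixes f :: "real^'d \<Rightarrow> real"
  assumes D: "Dif f" and D': "Dif (pd i f)" and K: "compact (supp f)"
  shows "integral\<^sup>L lborel (pd i f) = 0"
proof -
  let ?v = "axis i 1 :: real^'d"
  define t where "t = (\<lambda>n. inverse (real (Suc n)))"
  define s where "s n x = (f (t n *\<^sub>R ?v + x) - f x) / t n" for n x
  have cf: "continuous_on UNIV f" using D by (rule Dif_cont)
  have cpd: "continuous_on UNIV (pd i f)" using D' by (rule Dif_cont)
  have Kpd: "compact (supp (pd i f))"
  proof -
    have "supp (pd i f) = supp f \<inter> supp (pd i f)" using supp_pd[OF D] by blast
    moreover have "closed (supp (pd i f))" unfolding supp_def by simp
    ultimately show ?thesis using compact_Int_closed[OF K] by metis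
  qed
  obtain M where M: "\<forall>y. \<bar>pd i f y\<bar> \<le> M" using cs_bounded[OF cpd Kpd] by blast
  define K' where "K' = {a + b | a b. a \<in> supp f \<and> b \<in> cball 0 1}"
  have cK': "compact K'" unfolding K'_def by (intro compact_sums K compact_cball)
  have tpos: "t n > 0" "t n \<le> 1" for n by (auto simp: t_def field_simps)
  have intf: "integrable lborel f" by (rule cs_integrable[OF cf K])
  have mf: "f \<in> borel_measurable lborel" by (rule cont_borel[OF cf])
  have s0: "integral\<^sup>L lborel (s n) = 0" for n
  proof -
    have "integral\<^sup>L lborel (s n) = (integral\<^sup>L lborel (\<lambda>x. f (t n *\<^sub>R ?v + x)) - integral\<^sup>L lborel f) / t n"
      unfolding s_def using intf integrable_translate[OF intf] by simp
    also have "\<dots> = 0" by (simp add: integral_translate[OF mf])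
    finally show ?thesis .
  qed
  have ms: "s n \<in> borel_measurable lborel" for n
    unfolding s_def by (intro borel_measurable_divide borel_measurable_diff measurable_compose[OF _ mf] mf) auto
  have mpd: "pd i f \<in> borel_measurable lborel" by (rule cont_borel[OF cpd])
  have intw: "integrable lborel (\<lambda>x. indicator K' x *\<^sub>R M)"
    using cK' by (intro borel_integrable_compact) auto
  have lim: "(\<lambda>n. s n x) \<longlonglongrightarrow> pd i f x" for x
  proof -
    have "((\<lambda>h. (f (x + (0 + h) *\<^sub>R ?v) - f (x + 0 *\<^sub>R ?v)) / h) \<longlongrightarrow> pd i f (x + 0 *\<^sub>R ?v)) (at 0)"
      using dir_der[OF D, of x i 0] by (simp add: DERIV_def)
    then have l1: "((\<lambda>h. (f (h *\<^sub>R ?v + x) - f x) / h) \<longlongrightarrow> pd i f x) (at 0)"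
      by (simp add: add.commute)
    have l2: "filterlim t (at 0) sequentially"
      unfolding filterlim_at t_def using LIMSEQ_inverse_real_of_nat by auto
    show ?thesis using filterlim_compose[OF l1 l2] by (simp add: s_def o_def)
  qed
  have bound: "norm (s n x) \<le> indicator K' x *\<^sub>R M" for n x
  proof (cases "x \<in> K'")
    case True
    have "\<bar>f (x + t n *\<^sub>R ?v) - f x\<bar> \<le> M * \<bar>t n\<bar>" by (rule diff_bound[OF D M])
    then show ?thesis using True tpos[of n] by (simp add: s_def add.commute divide_le_eq)
  next
    case False
    have "x \<notin> supp f"
    proof
      assume "x \<in> supp f"
      moreover have "0 \<in> cball (0::real^'d) 1" by simp
      ultimately have "x + 0 \<in> K'" unfolding K'_def by blast
      with False show False by simp
    qed
    moreover have "t n *\<^sub>R ?v + x \<notin> supp f"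
    proof
      assume "t n *\<^sub>R ?v + x \<in> supp f"
      moreover have "- (t n *\<^sub>R ?v) \<in> cball 0 1" using tpos[of n] by simp
      ultimately have "(t n *\<^sub>R ?v + x) + - (t n *\<^sub>R ?v) \<in> K'" unfolding K'_def by blast
      with False show False by simp
    qed
    ultimately show ?thesis using False by (simp add: s_def not_supp)
  qed
  have "(\<lambda>n. integral\<^sup>L lborel (s n)) \<longlonglongrightarrow> integral\<^sup>L lborel (pd i f)"
    by (rule integral_dominated_convergence[OF mpd ms intw]) (use lim bound in auto)
  then have "(\<lambda>n. 0) \<longlonglongrightarrow> integral\<^sup>L lborel (pd i f)" by (simp add: s0)
  then show ?thesis by (simp add: LIMSEQ_const_iff)
qed



lemma tf_iff: "test_fun \<Omega> \<phi> \<longleftrightarrow> smooth_on UNIV \<phi> \<and> compact (supp \<phi>) \<and> supp \<phi> \<subseteq> \<Omega>"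
  by (simp add: test_fun_def supp_def)

lemma supp_add: "supp (\<lambda>x. f x + g x) \<subseteq> supp f \<union> supp g"
proof -
  have "{x. f x + g x \<noteq> 0} \<subseteq> {x. f x \<noteq> 0} \<union> {x. g x \<noteq> 0}" by auto
  then have "closure {x. f x + g x \<noteq> 0} \<subseteq> closure ({x. f x \<noteq> 0} \<union> {x. g x \<noteq> 0})" by (rule closure_mono)
  then show ?thesis by (simp add: supp_def closure_Un)
qed

lemma supp_mult: "supp (\<lambda>x. f x * g x) \<subseteq> supp f"
  unfolding supp_def by (rule closure_mono) auto

lemma supp_mult2: "supp (\<lambda>x. f x * g x) \<subseteq> supp g"
  unfolding supp_def by (rule closure_mono) auto

lemma supp_closed: "closed (supp f)" by (simp add: supp_def)

lemma compact_sub: "compact A \<Longrightarrow> B \<subseteq> A \<Longrightarrow> closed B \<Longrightarrow> compact B"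
  by (metis compact_Int_closed inf.absorb2)

lemma tf_add: "test_fun \<Omega> f \<Longrightarrow> test_fun \<Omega> g \<Longrightarrow> test_fun \<Omega> (\<lambda>x. f x + g x)"
  unfolding tf_iff using supp_add[of f g]
  by (auto intro: smooth_add compact_sub[OF compact_Un] supp_closed)

lemma tf_mult: "test_fun \<Omega> f \<Longrightarrow> smooth_on UNIV g \<Longrightarrow> test_fun \<Omega> (\<lambda>x. f x * g x)"
  unfolding tf_iff using supp_mult[of f g]
  by (auto intro: smooth_mult compact_sub supp_closed)

lemma tf_scale: "test_fun \<Omega> f \<Longrightarrow> test_fun \<Omega> (\<lambda>x. c * f x)"
proof -
  assume a: "test_fun \<Omega> f"
  have "smooth_on UNIV (\<lambda>x::real^'a. c)"
    using smooth_scale[OF smooth_prod[of "{}"]] by simp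
  from tf_mult[OF a this] show ?thesis by (simp add: mult.commute)
qed

lemma tf_zero: "test_fun \<Omega> (\<lambda>x. 0)"
  unfolding tf_iff by (simp add: smooth_zero supp_def)

lemma tf_sum: "finite B \<Longrightarrow> (\<And>b. b \<in> B \<Longrightarrow> test_fun \<Omega> (F b)) \<Longrightarrow> test_fun \<Omega> (\<lambda>x. \<Sum>b\<in>B. F b x)"
proof (induction B rule: finite_induct)
  case empty then show ?case by (simp add: tf_zero)
next
  case (insert b B) then show ?case by (simp add: tf_add)
qed

lemma tf_pd: "test_fun \<Omega> f \<Longrightarrow> test_fun \<Omega> (pd i f)"
  unfolding tf_iff using supp_pd[of f i] smooth_Dif
  by (auto intro: smooth_pd compact_sub supp_closed)

lemma tf_Dif: "test_fun \<Omega> f \<Longrightarrow> Dif f"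
  unfolding tf_iff using smooth_Dif by blast

lemma tf_cont: "test_fun \<Omega> f \<Longrightarrow> continuous_on UNIV f"
  using tf_Dif Dif_cont by blast

lemma tf_out: "test_fun \<Omega> f \<Longrightarrow> x \<notin> \<Omega> \<Longrightarrow> f x = 0"
  unfolding tf_iff using not_supp by blast

lemma pd_mult_fun: "Dif f \<Longrightarrow> Dif g \<Longrightarrow> pd i (\<lambda>x. f x * g x) = (\<lambda>x. pd i f x * g x + f x * pd i g x)"
  by (auto simp: pd_mult)

lemma pd_add_fun: "Dif f \<Longrightarrow> Dif g \<Longrightarrow> pd i (\<lambda>x. f x + g x) = (\<lambda>x. pd i f x + pd i g x)"
  by (auto simp: pd_add)

lemma pd_scale_fun: "Dif f \<Longrightarrow> pd i (\<lambda>x. c * f x) = (\<lambda>x. c * pd i f x)"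
  by (auto simp: pd_scale)

lemma pd_sum_fun: "finite B \<Longrightarrow> (\<And>b. b \<in> B \<Longrightarrow> Dif (F b)) \<Longrightarrow> pd i (\<lambda>x. \<Sum>b\<in>B. F b x) = (\<lambda>x. \<Sum>b\<in>B. pd i (F b) x)"
proof (induction B rule: finite_induct)
  case empty then show ?case by (simp add: pd_const)
next
  case (insert b B)
  have "Dif (\<lambda>x. \<Sum>b\<in>B. F b x)"
    using insert by (auto intro!: differentiable_sum)
  then show ?case using insert by (simp add: pd_add_fun)
qed

lemma omega_sets: "open \<Omega> \<Longrightarrow> \<Omega> \<in> sets lebesgue"
  by (simp add: borel_open sets_completionI_sets)

lemma borel_on: "f \<in> borel_measurable lborel \<Longrightarrow> f \<in> borel_measurable (lebesgue_on \<Omega>)"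
  by (intro measurable_restrict_space1 measurable_completion)

lemma int_on_lborel:
  fixes f :: "real^'d \<Rightarrow> real"
  assumes \<Omega>: "\<Omega> \<in> sets lebesgue" and f: "f \<in> borel_measurable lborel" and z: "\<And>x. x \<notin> \<Omega> \<Longrightarrow> f x = 0"
  shows "integral\<^sup>L (lebesgue_on \<Omega>) f = integral\<^sup>L lborel f"
proof -
  have "integral\<^sup>L (lebesgue_on \<Omega>) f = integral\<^sup>L lebesgue (\<lambda>x. indicator \<Omega> x *\<^sub>R f x)"
    using integral_restrict_space[of \<Omega> lebesgue f] \<Omega> by simp
  also have "(\<lambda>x. indicator \<Omega> x *\<^sub>R f x) = f"
  proof
    fix x show "indicator \<Omega> x *\<^sub>R f x = f x" using z[of x] by (cases "x \<in> \<Omega>") auto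
  qed
  also have "integral\<^sup>L lebesgue f = integral\<^sup>L lborel f"
    using f by (intro integral_completion) simp
  finally show ?thesis .
qed

lemma integrable_on_lborel:
  assumes \<Omega>: "\<Omega> \<in> sets lebesgue" and f: "integrable lborel f"
  shows "integrable (lebesgue_on \<Omega>) (f :: real^'d \<Rightarrow> real)"
proof -
  have m: "f \<in> borel_measurable lborel" using f by simp
  have "integrable lebesgue f" using f m by (simp add: integrable_completion)
  then have "integrable lebesgue (\<lambda>x. indicator \<Omega> x *\<^sub>R f x)"
    using \<Omega> by (intro integrable_mult_indicator) auto
  then show ?thesis using \<Omega> by (subst integrable_restrict_space) auto
qed

lemma tf_L2:
  assumes "open \<Omega>" "test_fun \<Omega> f"
  shows "L2 \<Omega> f"
proof -
  have c: "continuous_on UNIV f" using assms(2) by (rule tf_cont)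
  have K: "compact (supp f)" using assms(2) by (simp add: tf_iff)
  have c2: "continuous_on UNIV (\<lambda>x. (f x)\<^sup>2)" using c by (intro continuous_intros)
  have K2: "compact (supp (\<lambda>x. (f x)\<^sup>2))"
    by (rule compact_sub[OF K _ supp_closed]) (auto simp: supp_def power2_eq_square intro!: closure_mono)
  show ?thesis unfolding L2_def
    using borel_on[OF cont_borel[OF c]] integrable_on_lborel[OF omega_sets[OF assms(1)] cs_integrable[OF c2 K2]]
    by simp
qed

lemma tf_int_prod:
  assumes "open \<Omega>" "test_fun \<Omega> f" "test_fun \<Omega> g"
  shows "ip \<Omega> f g = integral\<^sup>L lborel (\<lambda>x. f x * g x)"
  unfolding ip_def
  using assms tf_out[OF assms(2)]
  by (intro int_on_lborel omega_sets cont_borel continuous_intros tf_cont) auto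

lemma IBP:
  assumes \<Omega>: "open \<Omega>" and f: "test_fun \<Omega> f" and g: "test_fun \<Omega> g"
  shows "ip \<Omega> f (pd i g) = - ip \<Omega> (pd i f) g"
proof -
  have fg: "test_fun \<Omega> (\<lambda>x. f x * g x)" using tf_mult[OF f, of g] g by (simp add: tf_iff)
  have Df: "Dif f" "Dif g" using f g tf_Dif by auto
  have pfg: "pd i (\<lambda>x. f x * g x) = (\<lambda>x. pd i f x * g x + f x * pd i g x)"
    by (rule pd_mult_fun[OF Df])
  have "integral\<^sup>L lborel (pd i (\<lambda>x. f x * g x)) = 0"
    using fg tf_Dif[OF tf_pd[OF fg]] tf_Dif[OF fg] by (intro IBP0) (auto simp: tf_iff)
  then have "integral\<^sup>L lborel (\<lambda>x. pd i f x * g x + f x * pd i g x) = 0" by (simp add: pfg)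
  moreover have i1: "integrable lborel (\<lambda>x. pd i f x * g x)"
  proof (rule cs_integrable)
    show "continuous_on UNIV (\<lambda>x. pd i f x * g x)"
      using tf_cont[OF tf_pd[OF f]] tf_cont[OF g] by (rule continuous_on_mult)
    show "compact (supp (\<lambda>x. pd i f x * g x))"
      by (rule compact_sub[OF _ supp_mult2 supp_closed]) (use g in \<open>simp add: tf_iff\<close>)
  qed
  moreover have i2: "integrable lborel (\<lambda>x. f x * pd i g x)"
  proof (rule cs_integrable)
    show "continuous_on UNIV (\<lambda>x. f x * pd i g x)"
      using tf_cont[OF f] tf_cont[OF tf_pd[OF g]] by (rule continuous_on_mult)
    show "compact (supp (\<lambda>x. f x * pd i g x))"
      by (rule compact_sub[OF _ supp_mult supp_closed]) (use f in \<open>simp add: tf_iff\<close>)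
  qed
  ultimately have "integral\<^sup>L lborel (\<lambda>x. pd i f x * g x) + integral\<^sup>L lborel (\<lambda>x. f x * pd i g x) = 0"
    by simp
  moreover have "ip \<Omega> f (pd i g) = integral\<^sup>L lborel (\<lambda>x. f x * pd i g x)"
    by (rule tf_int_prod[OF \<Omega> f tf_pd[OF g]])
  moreover have "ip \<Omega> (pd i f) g = integral\<^sup>L lborel (\<lambda>x. pd i f x * g x)"
    by (rule tf_int_prod[OF \<Omega> tf_pd[OF f] g])
  ultimately show ?thesis by simp
qed

lemma tf_wgrad:
  assumes "open \<Omega>" "test_fun \<Omega> f"
  shows "is_wgrad \<Omega> f (\<lambda>i. pd i f)"
  unfolding is_wgrad_def using assms
  by (auto intro: tf_L2 tf_pd IBP)



section \<open>Box bumps\<close>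

definition bump :: "nat \<Rightarrow> real^'d \<Rightarrow> real^'d \<Rightarrow> real^'d \<Rightarrow> real" where
  "bump n a b x = (\<Prod>i\<in>UNIV. bG 0 (real n * x $ i + - (real n * a $ i)) * bG 0 ((- real n) * x $ i + real n * b $ i))"

lemma bump_smooth: "smooth_on UNIV (bump n a b)"
  unfolding bump_def[abs_def]
  by (intro smooth_prod smooth_mult smooth_comp1 smooth1_bG) auto

lemma bump_nz: "bump n a b x \<noteq> 0 \<Longrightarrow> x \<in> box a b"
proof -
  assume nz: "bump n a b x \<noteq> 0"
  have "a $ i < x $ i \<and> x $ i < b $ i" for i
  proof -
    have f1: "bG 0 (real n * x $ i + - (real n * a $ i)) \<noteq> 0" and f2: "bG 0 ((- real n) * x $ i + real n * b $ i) \<noteq> 0"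
      using nz unfolding bump_def by auto
    then have p1: "real n * x $ i + - (real n * a $ i) > 0" and p2: "(- real n) * x $ i + real n * b $ i > 0"
      using bG0_zero by (metis not_le)+
    then have "real n * (x $ i - a $ i) > 0" "real n * (b $ i - x $ i) > 0" by (simp_all add: algebra_simps)
    then show ?thesis by (simp add: zero_less_mult_iff)
  qed
  then show ?thesis by (simp add: mem_box_cart)
qed

lemma bump_supp: "supp (bump n a b) \<subseteq> cbox a b"
  unfolding supp_def
proof (rule closure_minimal)
  show "{x. bump n a b x \<noteq> 0} \<subseteq> cbox a b" using bump_nz box_subset_cbox by blast
qed (rule closed_cbox)

lemma bump_tf: "cbox a b \<subseteq> \<Omega> \<Longrightarrow> test_fun \<Omega> (bump n a b)"
  unfolding tf_iff using bump_supp[of n a b]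
  by (auto intro: bump_smooth compact_sub[OF compact_cbox] supp_closed)

lemma bump_bounds: "0 \<le> bump n a b x" "bump n a b x \<le> 1"
  unfolding bump_def using bG0_bounds
  by (auto intro!: prod_nonneg prod_le_1 mult_le_one)

lemma bump_lim:
  fixes a b x :: "real^'d"
  shows "(\<lambda>n. bump n a b x) \<longlonglongrightarrow> indicator (box a b) x"
proof (cases "x \<in> box a b")
  case True
  then have ab: "a $ i < x $ i" "x $ i < b $ i" for i by (auto simp: mem_box_cart)
  have l: "(\<lambda>n. bG 0 (real n * x $ i + - (real n * a $ i)) * bG 0 ((- real n) * x $ i + real n * b $ i)) \<longlonglongrightarrow> 1 * 1" for i
  proof (intro tendsto_mult)
    have "(\<lambda>n. bG 0 (real n * (x $ i - a $ i))) \<longlonglongrightarrow> 1" using ab by (intro bG0_lim) simp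
    then show "(\<lambda>n. bG 0 (real n * x $ i + - (real n * a $ i))) \<longlonglongrightarrow> 1" by (simp add: algebra_simps)
    have "(\<lambda>n. bG 0 (real n * (b $ i - x $ i))) \<longlonglongrightarrow> 1" using ab by (intro bG0_lim) simp
    then show "(\<lambda>n. bG 0 ((- real n) * x $ i + real n * b $ i)) \<longlonglongrightarrow> 1" by (simp add: algebra_simps)
  qed
  define G where "G i n = bG 0 (real n * x $ i + - (real n * a $ i)) * bG 0 ((- real n) * x $ i + real n * b $ i)" for i n
  have l': "G i \<longlonglongrightarrow> 1 * 1" for i unfolding G_def[abs_def] by (rule l)
  have "(\<lambda>n. \<Prod>i\<in>UNIV. G i n) \<longlonglongrightarrow> (\<Prod>i\<in>(UNIV::'d set). 1 * 1)"
    apply (rule tendsto_prod) using l' by simp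
  then have "(\<lambda>n. bump n a b x) \<longlonglongrightarrow> (\<Prod>i\<in>(UNIV::'d set). 1 * 1)"
    unfolding bump_def G_def .
  then show ?thesis using True by simp
next
  case False
  then obtain i where i: "\<not> (a $ i < x $ i \<and> x $ i < b $ i)" by (auto simp: mem_box_cart)
  have "bump n a b x = 0" for n
  proof -
    have "bG 0 (real n * x $ i + - (real n * a $ i)) * bG 0 ((- real n) * x $ i + real n * b $ i) = 0"
    proof (cases "x $ i \<le> a $ i")
      case True
      have "real n * x $ i + - (real n * a $ i) = real n * (x $ i - a $ i)" by (simp add: algebra_simps)
      also have "\<dots> \<le> 0" using True by (simp add: mult_nonneg_nonpos)
      finally show ?thesis by (simp add: bG0_zero)
    next
      case False
      with i have "b $ i \<le> x $ i" by simp
      have "(- real n) * x $ i + real n * b $ i = real n * (b $ i - x $ i)" by (simp add: algebra_simps)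
      also have "\<dots> \<le> 0" using \<open>b $ i \<le> x $ i\<close> by (simp add: mult_nonneg_nonpos)
      finally show ?thesis by (simp add: bG0_zero)
    qed
    then show ?thesis unfolding bump_def by (intro prod_zero) auto
  qed
  then show ?thesis using False by simp
qed

lemma fin_on:
  assumes "open \<Omega>" "bounded \<Omega>"
  shows "finite_measure (lebesgue_on (\<Omega> :: (real^'d) set))"
proof
  have "emeasure lborel \<Omega> < \<infinity>" using assms(2) by (rule emeasure_bounded_finite)
  moreover have "emeasure lebesgue \<Omega> = emeasure lborel \<Omega>"
    using assms(1) by (simp add: borel_open)
  ultimately show "emeasure (lebesgue_on \<Omega>) (space (lebesgue_on \<Omega>)) \<noteq> \<infinity>"
    using assms(1) by (simp add: emeasure_restrict_space omega_sets)
qed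

lemma L2_integrable:
  assumes "open \<Omega>" "bounded \<Omega>" "L2 \<Omega> f"
  shows "integrable (lebesgue_on \<Omega>) f"
proof -
  interpret finite_measure "lebesgue_on \<Omega>" using fin_on[OF assms(1,2)] .
  show ?thesis
  proof (rule Bochner_Integration.integrable_bound)
    show "integrable (lebesgue_on \<Omega>) (\<lambda>x. 1 + (f x)\<^sup>2)" using assms(3) by (simp add: L2_def)
    show "f \<in> borel_measurable (lebesgue_on \<Omega>)" using assms(3) by (simp add: L2_def)
    show "AE x in lebesgue_on \<Omega>. norm (f x) \<le> norm (1 + (f x)\<^sup>2)"
    proof (rule AE_I2)
      fix x
      have "2 * \<bar>1 * f x\<bar> \<le> 1\<^sup>2 + (f x)\<^sup>2" by (rule two_abs)
      then show "norm (f x) \<le> norm (1 + (f x)\<^sup>2)" by simp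
    qed
  qed
qed

lemma box_int_zero:
  assumes \<Omega>: "open \<Omega>" "bounded \<Omega>" and D: "L2 \<Omega> D"
    and orth: "\<And>\<psi>. test_fun \<Omega> \<psi> \<Longrightarrow> ip \<Omega> D \<psi> = 0"
    and ab: "cbox a b \<subseteq> \<Omega>"
  shows "integral\<^sup>L (lebesgue_on \<Omega>) (\<lambda>x. D x * indicator (box a b) x) = 0"
proof -
  have intD: "integrable (lebesgue_on \<Omega>) D" by (rule L2_integrable[OF \<Omega> D])
  have mD: "D \<in> borel_measurable (lebesgue_on \<Omega>)" using D by (simp add: L2_def)
  have mb: "bump n a b \<in> borel_measurable (lebesgue_on \<Omega>)" for n
    by (intro borel_on cont_borel tf_cont[OF bump_tf[OF ab]])
  have "(\<lambda>n. integral\<^sup>L (lebesgue_on \<Omega>) (\<lambda>x. D x * bump n a b x)) \<longlonglongrightarrow> integral\<^sup>L (lebesgue_on \<Omega>) (\<lambda>x. D x * indicator (box a b) x)"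
  proof (rule integral_dominated_convergence[where w="\<lambda>x. norm (D x)"])
    show "(\<lambda>x. D x * indicator (box a b) x) \<in> borel_measurable (lebesgue_on \<Omega>)"
    proof -
      have mi: "indicator (box a b) \<in> borel_measurable (lebesgue_on \<Omega>)"
        by (intro borel_on borel_measurable_indicator) (simp add: borel_open)
      show ?thesis using borel_measurable_times[OF mD mi] .
    qed
    show "(\<lambda>x. D x * bump n a b x) \<in> borel_measurable (lebesgue_on \<Omega>)" for n
      using mD mb by (rule borel_measurable_times)
    show "integrable (lebesgue_on \<Omega>) (\<lambda>x. norm (D x))" using intD by simp
    show "AE x in lebesgue_on \<Omega>. (\<lambda>n. D x * bump n a b x) \<longlonglongrightarrow> D x * indicator (box a b) x"
      by (intro AE_I2 tendsto_mult tendsto_const bump_lim)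
    show "AE x in lebesgue_on \<Omega>. norm (D x * bump n a b x) \<le> norm (D x)" for n
      using bump_bounds[of n a b] by (intro AE_I2) (auto simp: abs_mult intro: mult_left_le)
  qed
  moreover have "integral\<^sup>L (lebesgue_on \<Omega>) (\<lambda>x. D x * bump n a b x) = 0" for n
    using orth[OF bump_tf[OF ab]] by (simp add: ip_def)
  ultimately show ?thesis by (simp add: LIMSEQ_const_iff)
qed



section \<open>Open sets as countable unions of boxes\<close>

lemma open_union_boxes:
  fixes M :: "(real^'d) set"
  assumes "open M"
  obtains \<D> where "countable \<D>" "\<And>X. X \<in> \<D> \<Longrightarrow> \<exists>a b. X = box a b \<and> cbox a b \<subseteq> M" "\<Union>\<D> = M"
proof -
  let ?a = "\<lambda>f. (\<Sum>(i::real^'d)\<in>Basis. fst (f i) *\<^sub>R i)"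
  let ?b = "\<lambda>f. (\<Sum>(i::real^'d)\<in>Basis. snd (f i) *\<^sub>R i)"
  let ?I = "{f\<in>Basis \<rightarrow>\<^sub>E \<rat> \<times> \<rat>. cbox (?a f) (?b f) \<subseteq> M}"
  let ?\<D> = "(\<lambda>f. box (?a f) (?b f)) ` ?I"
  show ?thesis
  proof
    have "countable ?I" by (simp add: countable_PiE countable_rat)
    then show "countable ?\<D>" by blast
    show "\<exists>a b. X = box a b \<and> cbox a b \<subseteq> M" if "X \<in> ?\<D>" for X using that by auto
    show "\<Union>?\<D> = M"
    proof
      show "\<Union>?\<D> \<subseteq> M" using box_subset_cbox by fastforce
      show "M \<subseteq> \<Union>?\<D>"
      proof
        fix x assume "x \<in> M"
        obtain e where e: "e > 0" "ball x e \<subseteq> M"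
          using openE[OF \<open>open M\<close> \<open>x \<in> M\<close>] by auto
        obtain a b where ab: "\<forall>i\<in>Basis. a \<bullet> i \<in> \<rat> \<and> b \<bullet> i \<in> \<rat>" "x \<in> box a b" "box a b \<subseteq> ball x (e/2)"
          using rational_boxes[of "e/2" x] e by auto
        have "box a b \<noteq> {}" using ab(2) by blast
        then have "cbox a b = closure (box a b)" by (simp add: closure_box)
        also have "\<dots> \<subseteq> closure (ball x (e/2))" using ab(3) by (rule closure_mono)
        also have "\<dots> = cball x (e/2)" using e by simp
        also have "\<dots> \<subseteq> ball x e" using e by (auto simp: subset_iff)
        finally have cb: "cbox a b \<subseteq> M" using e by blast
        let ?f = "\<lambda>i\<in>Basis. (a \<bullet> i, b \<bullet> i)"
        have f: "?f \<in> ?I" using ab cb by (auto simp: euclidean_representation)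
        have "box (?a ?f) (?b ?f) = box a b" by (simp add: euclidean_representation)
        with f ab(2) show "x \<in> \<Union>?\<D>" by blast
      qed
    qed
  qed
qed

definition boxgen :: "(real^'d) set \<Rightarrow> (real^'d) set set" where
  "boxgen \<Omega> = {box a b | a b. cbox a b \<subseteq> \<Omega>}"

lemma sets_boxgen:
  fixes \<Omega> :: "(real^'d) set"
  assumes "open \<Omega>"
  shows "(\<inter>) \<Omega> ` sets borel = sigma_sets \<Omega> (boxgen \<Omega>)"
proof -
  have "(\<inter>) \<Omega> ` sets borel = sigma_sets \<Omega> ((\<inter>) \<Omega> ` {S. open S})"
    unfolding sets_borel using assms by (intro sigma_sets_Int) auto
  also have "\<dots> = sigma_sets \<Omega> (boxgen \<Omega>)"
  proof (rule sigma_sets_eqI)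
    fix A assume "A \<in> (\<inter>) \<Omega> ` {S. open S}"
    then obtain S where S: "open S" "A = \<Omega> \<inter> S" by auto
    then have "open A" using assms by auto
    then obtain \<D> where D: "countable \<D>" "\<And>X. X \<in> \<D> \<Longrightarrow> \<exists>a b. X = box a b \<and> cbox a b \<subseteq> A" "\<Union>\<D> = A"
      using open_union_boxes[OF \<open>open A\<close>] by blast
    have "\<Union>\<D> \<in> sigma_sets \<Omega> (boxgen \<Omega>)"
    proof (rule sigma_sets_UNION[OF D(1)])
      fix X assume "X \<in> \<D>"
      then obtain a b where "X = box a b" "cbox a b \<subseteq> A" using D(2) by blast
      then have "X \<in> boxgen \<Omega>" using S unfolding boxgen_def by blast
      then show "X \<in> sigma_sets \<Omega> (boxgen \<Omega>)" by (rule sigma_sets.Basic)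
    qed
    then show "A \<in> sigma_sets \<Omega> (boxgen \<Omega>)" using D(3) by simp
  next
    fix B assume "B \<in> boxgen \<Omega>"
    then obtain a b where ab: "B = box a b" "cbox a b \<subseteq> \<Omega>" unfolding boxgen_def by blast
    then have "B = \<Omega> \<inter> box a b" using box_subset_cbox by blast
    then have "B \<in> (\<inter>) \<Omega> ` {S. open S}" by blast
    then show "B \<in> sigma_sets \<Omega> ((\<inter>) \<Omega> ` {S. open S})" by (rule sigma_sets.Basic)
  qed
  finally show ?thesis .
qed

lemma boxgen_Int_stable:
  fixes \<Omega> :: "(real^'d) set"
  shows "Int_stable (boxgen \<Omega>)"
  unfolding Int_stable_def boxgen_def
proof (clarify)
  fix a b c d :: "real^'d"
  assume ab: "cbox a b \<subseteq> \<Omega>" and cd: "cbox c d \<subseteq> \<Omega>"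
  let ?l = "\<Sum>i\<in>Basis. max (a\<bullet>i) (c\<bullet>i) *\<^sub>R i" and ?u = "\<Sum>i\<in>Basis. min (b\<bullet>i) (d\<bullet>i) *\<^sub>R i"
  have "cbox ?l ?u \<subseteq> cbox a b" by (auto simp: mem_box)
  then have "cbox ?l ?u \<subseteq> \<Omega>" using ab by blast
  then show "\<exists>aa ba. box a b \<inter> box c d = box aa ba \<and> cbox aa ba \<subseteq> \<Omega>"
    by (intro exI[of _ ?l] exI[of _ ?u]) (simp add: box_Int_box)
qed

lemma boxgen_sub: "boxgen \<Omega> \<subseteq> Pow \<Omega>"
  unfolding boxgen_def using box_subset_cbox by blast



lemma nn_le_norm: "(\<integral>\<^sup>+x. ennreal (g x) * indicator X x \<partial>M) \<le> (\<integral>\<^sup>+x. ennreal (norm (g x)) \<partial>M)"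
  by (intro nn_integral_mono) (auto simp: indicator_def)

lemma nn_fin:
  fixes g :: "'a \<Rightarrow> real"
  assumes "integrable M g"
  shows "(\<integral>\<^sup>+x. ennreal (g x) * indicator X x \<partial>M) < \<infinity>"
  using nn_le_norm[where g=g and X=X and M=M] assms by (simp add: integrable_iff_bounded) (meson order.strict_trans1)

lemma pos_neg_eq:
  fixes g :: "'a \<Rightarrow> real"
  assumes "integrable M g" "integral\<^sup>L M g = 0"
  shows "(\<integral>\<^sup>+x. ennreal (g x) \<partial>M) = (\<integral>\<^sup>+x. ennreal (- g x) \<partial>M)"
proof -
  have A: "(\<integral>\<^sup>+x. ennreal (g x) \<partial>M) < \<infinity>" using nn_fin[OF assms(1), of UNIV] by simp
  have "integrable M (\<lambda>x. - g x)" using assms(1) by simp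
  then have B: "(\<integral>\<^sup>+x. ennreal (- g x) \<partial>M) < \<infinity>" using nn_fin[of M "\<lambda>x. - g x" UNIV] by simp
  have "enn2real (\<integral>\<^sup>+x. ennreal (g x) \<partial>M) = enn2real (\<integral>\<^sup>+x. ennreal (- g x) \<partial>M)"
    using real_lebesgue_integral_def[OF assms(1)] assms(2) by simp
  then have e: "ennreal (enn2real (\<integral>\<^sup>+x. ennreal (g x) \<partial>M)) = ennreal (enn2real (\<integral>\<^sup>+x. ennreal (- g x) \<partial>M))"
    by simp
  have e1: "ennreal (enn2real (\<integral>\<^sup>+x. ennreal (g x) \<partial>M)) = (\<integral>\<^sup>+x. ennreal (g x) \<partial>M)"
    using A by (intro ennreal_enn2real) simp
  have e2: "ennreal (enn2real (\<integral>\<^sup>+x. ennreal (- g x) \<partial>M)) = (\<integral>\<^sup>+x. ennreal (- g x) \<partial>M)"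
    using B by (intro ennreal_enn2real) simp
  from e show ?thesis unfolding e1 e2 .
qed

lemma ennreal_ind: "ennreal (h x * indicator X x) = ennreal (h x) * indicator X x"
  by (auto simp: indicator_def)

lemma ennreal_ind_neg: "ennreal (- (h x * indicator X x)) = ennreal (- h x) * indicator X x"
  by (auto simp: indicator_def)

lemma ae_zero_boxes:
  fixes h :: "real^'d \<Rightarrow> real"
  assumes \<Omega>: "open \<Omega>" and hm: "h \<in> borel_measurable borel" and hi: "integrable lborel h"
    and h0: "\<And>x. x \<notin> \<Omega> \<Longrightarrow> h x = 0"
    and bx: "\<And>a b. cbox a b \<subseteq> \<Omega> \<Longrightarrow> integral\<^sup>L lborel (\<lambda>x. h x * indicator (box a b) x) = 0"
  shows "AE x in lborel. h x = 0"
proof -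
  define \<mu>1 where "\<mu>1 = density lborel (\<lambda>x. ennreal (h x))"
  define \<mu>2 where "\<mu>2 = density lborel (\<lambda>x. ennreal (- h x))"
  define M1 where "M1 = restrict_space \<mu>1 \<Omega>"
  define M2 where "M2 = restrict_space \<mu>2 \<Omega>"
  have \<Omega>b: "\<Omega> \<in> sets borel" using \<Omega> by (simp add: borel_open)
  have hm': "h \<in> borel_measurable lborel" using hm by simp
  have em1: "emeasure M1 X = (\<integral>\<^sup>+x. ennreal (h x) * indicator X x \<partial>lborel)" if "X \<in> sets borel" "X \<subseteq> \<Omega>" for X
  proof -
    have "emeasure M1 X = emeasure \<mu>1 X" unfolding M1_def using \<Omega>b that by (intro emeasure_restrict_space) (auto simp: \<mu>1_def)
    also have "\<dots> = (\<integral>\<^sup>+x. ennreal (h x) * indicator X x \<partial>lborel)"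
      unfolding \<mu>1_def using that hm' by (intro emeasure_density) auto
    finally show ?thesis .
  qed
  have em2: "emeasure M2 X = (\<integral>\<^sup>+x. ennreal (- h x) * indicator X x \<partial>lborel)" if "X \<in> sets borel" "X \<subseteq> \<Omega>" for X
  proof -
    have "emeasure M2 X = emeasure \<mu>2 X" unfolding M2_def using \<Omega>b that by (intro emeasure_restrict_space) (auto simp: \<mu>2_def)
    also have "\<dots> = (\<integral>\<^sup>+x. ennreal (- h x) * indicator X x \<partial>lborel)"
      unfolding \<mu>2_def using that hm' by (intro emeasure_density) auto
    finally show ?thesis .
  qed
  have sM1: "sets M1 = sigma_sets \<Omega> (boxgen \<Omega>)"
    unfolding M1_def \<mu>1_def using sets_boxgen[OF \<Omega>] by (simp add: sets_restrict_space)
  have sM2: "sets M2 = sigma_sets \<Omega> (boxgen \<Omega>)"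
    unfolding M2_def \<mu>2_def using sets_boxgen[OF \<Omega>] by (simp add: sets_restrict_space)
  obtain \<D> where D: "countable \<D>" "\<And>X. X \<in> \<D> \<Longrightarrow> \<exists>a b. X = box a b \<and> cbox a b \<subseteq> \<Omega>" "\<Union>\<D> = \<Omega>"
    using open_union_boxes[OF \<Omega>] by blast
  have M12: "M1 = M2"
  proof (rule measure_eqI_generator_eq_countable[OF boxgen_Int_stable boxgen_sub _ sM1 sM2])
    fix X assume "X \<in> boxgen \<Omega>"
    then obtain a b where ab: "X = box a b" "cbox a b \<subseteq> \<Omega>" unfolding boxgen_def by blast
    then have Xs: "X \<in> sets borel" "X \<subseteq> \<Omega>" using box_subset_cbox by (auto simp: borel_open)
    have "integrable lborel (\<lambda>x. h x * indicator X x)"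
      using hi Xs by (intro integrable_real_mult_indicator) auto
    from pos_neg_eq[OF this] bx[OF ab(2)] ab(1)
    have "(\<integral>\<^sup>+x. ennreal (h x * indicator X x) \<partial>lborel) = (\<integral>\<^sup>+x. ennreal (- (h x * indicator X x)) \<partial>lborel)"
      by simp
    then show "emeasure M1 X = emeasure M2 X"
      using em1[OF Xs] em2[OF Xs] by (simp add: ennreal_ind ennreal_ind_neg)
  next
    show "\<D> \<subseteq> boxgen \<Omega>" using D(2) unfolding boxgen_def by blast
    show "\<Union>\<D> = \<Omega>" by (rule D(3))
    show "countable \<D>" by (rule D(1))
    fix X assume "X \<in> \<D>"
    then obtain a b where ab: "X = box a b" "cbox a b \<subseteq> \<Omega>" using D(2) by blast
    then have Xs: "X \<in> sets borel" "X \<subseteq> \<Omega>" using box_subset_cbox by (auto simp: borel_open)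
    show "emeasure M1 X \<noteq> \<infinity>" using em1[OF Xs] nn_fin[OF hi, of X] by simp
  qed
  define P where "P = {x\<in>\<Omega>. h x > 0}"
  define N where "N = {x\<in>\<Omega>. h x < 0}"
  have Ps: "P \<in> sets borel" "P \<subseteq> \<Omega>" unfolding P_def using \<Omega>b hm by auto
  have Ns: "N \<in> sets borel" "N \<subseteq> \<Omega>" unfolding N_def using \<Omega>b hm by auto
  have "(\<integral>\<^sup>+x. ennreal (h x) * indicator P x \<partial>lborel) = (\<integral>\<^sup>+x. ennreal (- h x) * indicator P x \<partial>lborel)"
    using em1[OF Ps] em2[OF Ps] M12 by simp
  also have "(\<lambda>x. ennreal (- h x) * indicator P x) = (\<lambda>x. 0)"
    by (rule ext) (auto simp: P_def indicator_def ennreal_neg)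
  also have "(\<integral>\<^sup>+x. 0 \<partial>lborel) = 0" by simp
  finally have "AE x in lborel. ennreal (h x) * indicator P x = 0"
    using hm' Ps by (subst nn_integral_0_iff_AE[symmetric]) auto
  then have aeP: "AE x in lborel. x \<notin> P"
    by eventually_elim (auto simp: P_def indicator_def)
  have "(\<integral>\<^sup>+x. ennreal (- h x) * indicator N x \<partial>lborel) = (\<integral>\<^sup>+x. ennreal (h x) * indicator N x \<partial>lborel)"
    using em1[OF Ns] em2[OF Ns] M12 by simp
  also have "(\<lambda>x. ennreal (h x) * indicator N x) = (\<lambda>x. 0)"
    by (rule ext) (auto simp: N_def indicator_def ennreal_neg)
  also have "(\<integral>\<^sup>+x. 0 \<partial>lborel) = 0" by simp
  finally have "AE x in lborel. ennreal (- h x) * indicator N x = 0"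
    using hm' Ns by (subst nn_integral_0_iff_AE[symmetric]) auto
  then have aeN: "AE x in lborel. x \<notin> N"
    by eventually_elim (auto simp: N_def indicator_def)
  from aeP aeN show ?thesis
  proof eventually_elim
    case (elim x)
    show ?case
    proof (cases "x \<in> \<Omega>")
      case True then show ?thesis using elim by (auto simp: P_def N_def)
    next
      case False then show ?thesis using h0 by simp
    qed
  qed
qed



lemma fundamental:
  fixes D :: "real^'d \<Rightarrow> real"
  assumes \<Omega>: "open \<Omega>" "bounded \<Omega>" and DL: "L2 \<Omega> D"
    and orth: "\<And>\<psi>. test_fun \<Omega> \<psi> \<Longrightarrow> ip \<Omega> D \<psi> = 0"
  shows "AE x in lebesgue_on \<Omega>. D x = 0"
proof -
  have \<Omega>s: "\<Omega> \<in> sets lebesgue" using \<Omega>(1) by (rule omega_sets)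
  define E where "E x = indicator \<Omega> x * D x" for x
  have mD: "D \<in> borel_measurable (lebesgue_on \<Omega>)" using DL by (simp add: L2_def)
  have mE: "E \<in> borel_measurable lebesgue"
    using mD borel_measurable_restrict_space_iff[of \<Omega> lebesgue D] \<Omega>s by (simp add: E_def[abs_def])
  have iD: "integrable (lebesgue_on \<Omega>) D" by (rule L2_integrable[OF \<Omega> DL])
  have iE: "integrable lebesgue E"
    using iD integrable_restrict_space[of \<Omega> lebesgue D] \<Omega>s by (simp add: E_def[abs_def])
  obtain g where gm: "g \<in> borel_measurable lborel" and gE: "AE x in lborel. E x = g x"
    using completion_ex_borel_measurable_real[OF mE] by blast
  define h where "h x = indicator \<Omega> x * g x" for x
  have \<Omega>b: "\<Omega> \<in> sets borel" using \<Omega>(1) by (simp add: borel_open)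
  have hm: "h \<in> borel_measurable borel"
    unfolding h_def[abs_def] using gm \<Omega>b by simp
  have hE: "AE x in lborel. E x = h x"
    using gE by eventually_elim (auto simp: E_def h_def indicator_def)
  have hEc: "AE x in lebesgue. E x = h x" using hE by (rule AE_completion)
  have ih: "integrable lborel h"
  proof -
    have hmL: "h \<in> borel_measurable lebesgue" using hm by (intro measurable_completion) simp
    have "integrable lebesgue h" by (rule integrable_cong_AE_imp[OF iE hmL hEc])
    then show ?thesis using hm by (simp add: integrable_completion)
  qed
  have h0: "h x = 0" if "x \<notin> \<Omega>" for x using that by (simp add: h_def)
  have bx: "integral\<^sup>L lborel (\<lambda>x. h x * indicator (box a b) x) = 0" if ab: "cbox a b \<subseteq> \<Omega>" for a b
  proof -
    have mhb: "(\<lambda>x. h x * indicator (box a b) x) \<in> borel_measurable lborel"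
      using hm by (simp add: borel_open)
    have "integral\<^sup>L lborel (\<lambda>x. h x * indicator (box a b) x) = integral\<^sup>L lebesgue (\<lambda>x. h x * indicator (box a b) x)"
      using mhb by (simp add: integral_completion)
    also have "\<dots> = integral\<^sup>L lebesgue (\<lambda>x. E x * indicator (box a b) x)"
    proof (rule integral_cong_AE)
      show "(\<lambda>x. h x * indicator (box a b) x) \<in> borel_measurable lebesgue"
        using mhb by (intro measurable_completion) simp
      have mi: "indicator (box a b) \<in> borel_measurable lebesgue"
        by (intro measurable_completion borel_measurable_indicator) (simp add: borel_open)
      show "(\<lambda>x. E x * indicator (box a b) x) \<in> borel_measurable lebesgue"
        using borel_measurable_times[OF mE mi] .
      show "AE x in lebesgue. h x * indicator (box a b) x = E x * indicator (box a b) x"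
        using hEc by eventually_elim simp
    qed
    also have "\<dots> = integral\<^sup>L lebesgue (\<lambda>x. indicator \<Omega> x *\<^sub>R (D x * indicator (box a b) x))"
      by (simp add: E_def mult_ac)
    also have "\<dots> = integral\<^sup>L (lebesgue_on \<Omega>) (\<lambda>x. D x * indicator (box a b) x)"
      using integral_restrict_space[of \<Omega> lebesgue "\<lambda>x. D x * indicator (box a b) x"] \<Omega>s by simp
    also have "\<dots> = 0" by (rule box_int_zero[OF \<Omega> DL orth ab])
    finally show ?thesis .
  qed
  have "AE x in lborel. h x = 0" by (rule ae_zero_boxes[OF \<Omega>(1) hm ih h0 bx])
  then have "AE x in lebesgue. h x = 0" by (rule AE_completion)
  with hEc have "AE x in lebesgue. x \<in> \<Omega> \<longrightarrow> D x = 0"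
    by eventually_elim (auto simp: E_def)
  then show ?thesis using \<Omega>s by (simp add: AE_restrict_space_iff)
qed

lemma wgrad_unique:
  fixes f :: "real^'d \<Rightarrow> real"
  assumes \<Omega>: "open \<Omega>" "bounded \<Omega>" and G: "is_wgrad \<Omega> f G" and K: "is_wgrad \<Omega> f K"
  shows "AE x in lebesgue_on \<Omega>. G i x = K i x"
proof -
  have GL: "L2 \<Omega> (G i)" and KL: "L2 \<Omega> (K i)" using G K by (auto simp: is_wgrad_def)
  have "AE x in lebesgue_on \<Omega>. G i x - K i x = 0"
  proof (rule fundamental[OF \<Omega> L2_diff[OF GL KL]])
    fix \<psi> assume t: "test_fun \<Omega> \<psi>"
    have \<psi>L: "L2 \<Omega> \<psi>" by (rule tf_L2[OF \<Omega>(1) t])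
    have "ip \<Omega> (\<lambda>x. G i x - K i x) \<psi> = ip \<Omega> (G i) \<psi> - ip \<Omega> (K i) \<psi>"
      by (rule ip_diff1[OF GL KL \<psi>L])
    also have "\<dots> = 0" using G K t by (simp add: is_wgrad_def)
    finally show "ip \<Omega> (\<lambda>x. G i x - K i x) \<psi> = 0" .
  qed
  then show ?thesis by simp
qed



section \<open>L4 functions\<close>

definition L4 :: "(real^'d) set \<Rightarrow> (real^'d \<Rightarrow> real) \<Rightarrow> bool" where
  "L4 \<Omega> f \<longleftrightarrow> f \<in> borel_measurable (lebesgue_on \<Omega>) \<and> integrable (lebesgue_on \<Omega>) (\<lambda>x. (f x) ^ 4)"

definition I4 :: "(real^'d) set \<Rightarrow> (real^'d \<Rightarrow> real) \<Rightarrow> real" where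
  "I4 \<Omega> f = integral\<^sup>L (lebesgue_on \<Omega>) (\<lambda>x. (f x) ^ 4)"

lemma I4_nonneg: "I4 \<Omega> f \<ge> 0"
  unfolding I4_def
  apply (rule integral_nonneg_AE)
  apply (rule AE_I2)
  by simp

lemma pow4_sum: fixes a b :: real shows "(a + b) ^ 4 \<le> 8 * (a ^ 4 + b ^ 4)"
proof -
  have h1: "(a + b)\<^sup>2 \<le> 2 * (a\<^sup>2 + b\<^sup>2)"
  proof -
    have "0 \<le> (a - b)\<^sup>2" by simp
    then show ?thesis by (simp add: power2_eq_square algebra_simps)
  qed
  have h2: "(a\<^sup>2 + b\<^sup>2)\<^sup>2 \<le> 2 * ((a\<^sup>2)\<^sup>2 + (b\<^sup>2)\<^sup>2)"
  proof -
    have "0 \<le> (a\<^sup>2 - b\<^sup>2)\<^sup>2" by simp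
    then show ?thesis by (simp add: power2_eq_square algebra_simps)
  qed
  have "(a + b) ^ 4 = ((a + b)\<^sup>2)\<^sup>2" by simp
  also have "\<dots> \<le> (2 * (a\<^sup>2 + b\<^sup>2))\<^sup>2"
    using h1 by (intro power_mono) auto
  also have "\<dots> = 4 * (a\<^sup>2 + b\<^sup>2)\<^sup>2" by (simp add: power2_eq_square algebra_simps)
  also have "\<dots> \<le> 4 * (2 * ((a\<^sup>2)\<^sup>2 + (b\<^sup>2)\<^sup>2))" using h2 by simp
  also have "\<dots> = 8 * (a ^ 4 + b ^ 4)" by simp
  finally show ?thesis .
qed

lemma L4_add: "L4 \<Omega> f \<Longrightarrow> L4 \<Omega> g \<Longrightarrow> L4 \<Omega> (\<lambda>x. f x + g x)"
  unfolding L4_def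
proof (intro conjI)
  assume a: "f \<in> borel_measurable (lebesgue_on \<Omega>) \<and> integrable (lebesgue_on \<Omega>) (\<lambda>x. f x ^ 4)"
     "g \<in> borel_measurable (lebesgue_on \<Omega>) \<and> integrable (lebesgue_on \<Omega>) (\<lambda>x. g x ^ 4)"
  then show m: "(\<lambda>x. f x + g x) \<in> borel_measurable (lebesgue_on \<Omega>)" by (intro borel_measurable_add) auto
  show "integrable (lebesgue_on \<Omega>) (\<lambda>x. (f x + g x) ^ 4)"
  proof (rule Bochner_Integration.integrable_bound)
    show "integrable (lebesgue_on \<Omega>) (\<lambda>x. 8 * (f x ^ 4 + g x ^ 4))" using a by simp
    show "(\<lambda>x. (f x + g x) ^ 4) \<in> borel_measurable (lebesgue_on \<Omega>)" using m by (rule borel_measurable_power)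
    show "AE x in lebesgue_on \<Omega>. norm ((f x + g x) ^ 4) \<le> norm (8 * (f x ^ 4 + g x ^ 4))"
      using pow4_sum by (intro AE_I2) (simp add: add_nonneg_nonneg)
  qed
qed

lemma L4_neg: "L4 \<Omega> f \<Longrightarrow> L4 \<Omega> (\<lambda>x. - f x)"
  unfolding L4_def by simp

lemma L4_diff: "L4 \<Omega> f \<Longrightarrow> L4 \<Omega> g \<Longrightarrow> L4 \<Omega> (\<lambda>x. f x - g x)"
  using L4_add[of \<Omega> f "\<lambda>x. - g x"] L4_neg[of \<Omega> g] by simp

lemma L4_sq_L2: "L4 \<Omega> f \<Longrightarrow> L2 \<Omega> (\<lambda>x. (f x)\<^sup>2)"
  unfolding L4_def L2_def by (auto simp: power_mult[symmetric] intro: borel_measurable_power)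

lemma nrm_sq_fun: "nrm \<Omega> (\<lambda>x. (f x)\<^sup>2) = sqrt (I4 \<Omega> f)"
  unfolding nrm_def ip_def I4_def by (simp add: power2_eq_square[symmetric] power_mult[symmetric])

lemma L4_prod_L2: "L4 \<Omega> f \<Longrightarrow> L4 \<Omega> g \<Longrightarrow> L2 \<Omega> (\<lambda>x. f x * g x)"
proof -
  assume f: "L4 \<Omega> f" and g: "L4 \<Omega> g"
  have "integrable (lebesgue_on \<Omega>) (\<lambda>x. (f x)\<^sup>2 * (g x)\<^sup>2)"
    by (rule L2_prod_int[OF L4_sq_L2[OF f] L4_sq_L2[OF g]])
  then show ?thesis using f g unfolding L2_def L4_def by (auto simp: power_mult_distrib intro: borel_measurable_times)
qed

lemma nrm_prod_bound:
  assumes f: "L4 \<Omega> f" and g: "L4 \<Omega> g"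
  shows "(nrm \<Omega> (\<lambda>x. f x * g x))\<^sup>2 \<le> sqrt (I4 \<Omega> f) * sqrt (I4 \<Omega> g)"
proof -
  have "(nrm \<Omega> (\<lambda>x. f x * g x))\<^sup>2 = ip \<Omega> (\<lambda>x. (f x)\<^sup>2) (\<lambda>x. (g x)\<^sup>2)"
    unfolding nrm_sq ip_def by (simp add: power_mult_distrib power2_eq_square mult_ac)
  also have "\<dots> \<le> \<bar>ip \<Omega> (\<lambda>x. (f x)\<^sup>2) (\<lambda>x. (g x)\<^sup>2)\<bar>" by simp
  also have "\<dots> \<le> nrm \<Omega> (\<lambda>x. (f x)\<^sup>2) * nrm \<Omega> (\<lambda>x. (g x)\<^sup>2)"
    by (rule CS[OF L4_sq_L2[OF f] L4_sq_L2[OF g]])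
  finally show ?thesis by (simp add: nrm_sq_fun)
qed

lemma tri_bound:
  assumes f: "L4 \<Omega> f" and g: "L4 \<Omega> g" and k: "L2 \<Omega> k"
  shows "\<bar>integral\<^sup>L (lebesgue_on \<Omega>) (\<lambda>x. f x * g x * k x)\<bar> \<le> sqrt (sqrt (I4 \<Omega> f) * sqrt (I4 \<Omega> g)) * nrm \<Omega> k"
proof -
  have "integral\<^sup>L (lebesgue_on \<Omega>) (\<lambda>x. f x * g x * k x) = ip \<Omega> (\<lambda>x. f x * g x) k"
    by (simp add: ip_def)
  also have "\<bar>\<dots>\<bar> \<le> nrm \<Omega> (\<lambda>x. f x * g x) * nrm \<Omega> k"
    by (rule CS[OF L4_prod_L2[OF f g] k])
  also have "\<dots> \<le> sqrt (sqrt (I4 \<Omega> f) * sqrt (I4 \<Omega> g)) * nrm \<Omega> k"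
  proof (rule mult_right_mono)
    have "nrm \<Omega> (\<lambda>x. f x * g x) = sqrt ((nrm \<Omega> (\<lambda>x. f x * g x))\<^sup>2)"
      using nrm_nonneg[of \<Omega> "\<lambda>x. f x * g x"] by simp
    also have "\<dots> \<le> sqrt (sqrt (I4 \<Omega> f) * sqrt (I4 \<Omega> g))"
      by (rule real_sqrt_le_mono[OF nrm_prod_bound[OF f g]])
    finally show "nrm \<Omega> (\<lambda>x. f x * g x) \<le> sqrt (sqrt (I4 \<Omega> f) * sqrt (I4 \<Omega> g))" .
  qed (rule nrm_nonneg)
  finally show ?thesis .
qed

lemma tri_int:
  assumes f: "L4 \<Omega> f" and g: "L4 \<Omega> g" and k: "L2 \<Omega> k"
  shows "integrable (lebesgue_on \<Omega>) (\<lambda>x. f x * g x * k x)"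
  using L2_prod_int[OF L4_prod_L2[OF f g] k] .

lemma tri_lim:
  assumes f: "\<And>n. L4 \<Omega> (f n)" and g: "\<And>n. L4 \<Omega> (g n)" and k: "\<And>n. L2 \<Omega> (k n)"
    and f0: "(\<lambda>n. I4 \<Omega> (f n)) \<longlonglongrightarrow> 0"
    and gb: "eventually (\<lambda>n. I4 \<Omega> (g n) \<le> B) sequentially"
    and kb: "eventually (\<lambda>n. nrm \<Omega> (k n) \<le> C) sequentially"
  shows "(\<lambda>n. integral\<^sup>L (lebesgue_on \<Omega>) (\<lambda>x. f n x * g n x * k n x)) \<longlonglongrightarrow> 0"
proof (rule Lim_null_comparison)
  show "eventually (\<lambda>n. norm (integral\<^sup>L (lebesgue_on \<Omega>) (\<lambda>x. f n x * g n x * k n x)) \<le> sqrt (sqrt (I4 \<Omega> (f n)) * sqrt B) * C) sequentially"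
    using gb kb
  proof eventually_elim
    case (elim n)
    have "norm (integral\<^sup>L (lebesgue_on \<Omega>) (\<lambda>x. f n x * g n x * k n x)) \<le> sqrt (sqrt (I4 \<Omega> (f n)) * sqrt (I4 \<Omega> (g n))) * nrm \<Omega> (k n)"
      using tri_bound[OF f g k] by simp
    also have "\<dots> \<le> sqrt (sqrt (I4 \<Omega> (f n)) * sqrt B) * C"
      using elim I4_nonneg[of \<Omega> "f n"] I4_nonneg[of \<Omega> "g n"] nrm_nonneg[of \<Omega> "k n"]
      by (intro mult_mono real_sqrt_le_mono mult_left_mono) auto
    finally show ?case .
  qed
  have "(\<lambda>n. sqrt (sqrt (I4 \<Omega> (f n)) * sqrt B) * C) \<longlonglongrightarrow> sqrt (sqrt 0 * sqrt B) * C"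
    by (intro tendsto_intros f0)
  then show "(\<lambda>n. sqrt (sqrt (I4 \<Omega> (f n)) * sqrt B) * C) \<longlonglongrightarrow> 0" by simp
qed



lemma wgrad_works: "H1 \<Omega> f \<Longrightarrow> is_wgrad \<Omega> f (wgrad \<Omega> f)"
proof -
  assume "H1 \<Omega> f"
  then have "\<exists>G. is_wgrad \<Omega> f G" by (simp add: H1_def)
  then show ?thesis unfolding wgrad_def by (rule someI_ex)
qed

lemma wgrad_L2: "is_wgrad \<Omega> f G \<Longrightarrow> L2 \<Omega> (G i)"
  by (simp add: is_wgrad_def)

lemma wgrad_fL2: "is_wgrad \<Omega> f G \<Longrightarrow> L2 \<Omega> f"
  by (simp add: is_wgrad_def)

lemma wgrad_lin:
  assumes \<Omega>: "open \<Omega>" and f: "is_wgrad \<Omega> f G" and g: "is_wgrad \<Omega> g K"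
  shows "is_wgrad \<Omega> (\<lambda>x. a * f x + b * g x) (\<lambda>i x. a * G i x + b * K i x)"
  unfolding is_wgrad_def
proof (intro conjI allI impI)
  show "L2 \<Omega> (\<lambda>x. a * f x + b * g x)" using f g by (intro L2_lin) (auto simp: is_wgrad_def)
  fix i
  show "L2 \<Omega> (\<lambda>x. a * G i x + b * K i x)" using f g by (intro L2_lin) (auto simp: is_wgrad_def)
  fix \<phi> assume t: "test_fun \<Omega> \<phi>"
  have pL: "L2 \<Omega> (pd i \<phi>)" by (rule tf_L2[OF \<Omega> tf_pd[OF t]])
  have L: "L2 \<Omega> \<phi>" by (rule tf_L2[OF \<Omega> t])
  have "ip \<Omega> (\<lambda>x. a * f x + b * g x) (pd i \<phi>) = a * ip \<Omega> f (pd i \<phi>) + b * ip \<Omega> g (pd i \<phi>)"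
    using f g pL by (intro ip_lin1) (auto simp: is_wgrad_def)
  also have "\<dots> = - (a * ip \<Omega> (G i) \<phi> + b * ip \<Omega> (K i) \<phi>)"
    using f g t by (simp add: is_wgrad_def)
  also have "a * ip \<Omega> (G i) \<phi> + b * ip \<Omega> (K i) \<phi> = ip \<Omega> (\<lambda>x. a * G i x + b * K i x) \<phi>"
    using f g L by (intro ip_lin1[symmetric]) (auto simp: is_wgrad_def)
  finally show "ip \<Omega> (\<lambda>x. a * f x + b * g x) (pd i \<phi>) = - ip \<Omega> (\<lambda>x. a * G i x + b * K i x) \<phi>" .
qed

lemma wgrad_zero: "is_wgrad \<Omega> (\<lambda>x. 0) (\<lambda>i x. 0)"
  unfolding is_wgrad_def by (simp add: L2_zero ip_def)

lemma wgrad_sum: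
  assumes \<Omega>: "open \<Omega>"
  shows "finite B \<Longrightarrow> (\<And>b. b \<in> B \<Longrightarrow> is_wgrad \<Omega> (F b) (G b)) \<Longrightarrow>
    is_wgrad \<Omega> (\<lambda>x. \<Sum>b\<in>B. c b * F b x) (\<lambda>i x. \<Sum>b\<in>B. c b * G b i x)"
proof (induction B rule: finite_induct)
  case empty then show ?case by (simp add: wgrad_zero)
next
  case (insert b B)
  have "is_wgrad \<Omega> (\<lambda>x. c b * F b x + 1 * (\<Sum>b\<in>B. c b * F b x)) (\<lambda>i x. c b * G b i x + 1 * (\<Sum>b\<in>B. c b * G b i x))"
    using insert by (intro wgrad_lin[OF \<Omega>]) auto
  then show ?case using insert by simp
qed

lemma ip_ae:
  assumes "AE x in lebesgue_on \<Omega>. f x = g x"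
    and "f \<in> borel_measurable (lebesgue_on \<Omega>)" "g \<in> borel_measurable (lebesgue_on \<Omega>)"
    "k \<in> borel_measurable (lebesgue_on \<Omega>)"
  shows "ip \<Omega> f k = ip \<Omega> g k"
  unfolding ip_def using assms(1)
  by (intro integral_cong_AE borel_measurable_times assms(2-4)) (auto elim: AE_mp)

lemma nrm_ae:
  assumes "AE x in lebesgue_on \<Omega>. f x = g x"
    and "f \<in> borel_measurable (lebesgue_on \<Omega>)" "g \<in> borel_measurable (lebesgue_on \<Omega>)"
  shows "nrm \<Omega> f = nrm \<Omega> g"
proof -
  have "AE x in lebesgue_on \<Omega>. f x * f x = g x * g x" using assms(1) by eventually_elim simp
  then have "integral\<^sup>L (lebesgue_on \<Omega>) (\<lambda>x. f x * f x) = integral\<^sup>L (lebesgue_on \<Omega>) (\<lambda>x. g x * g x)"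
    by (intro integral_cong_AE borel_measurable_times assms(2,3))
  then show ?thesis by (simp add: nrm_def ip_def)
qed



lemma nrm_sum_bound:
  "finite B \<Longrightarrow> (\<And>b. b \<in> B \<Longrightarrow> L2 \<Omega> (F b)) \<Longrightarrow>
    nrm \<Omega> (\<lambda>x. \<Sum>b\<in>B. c b * F b x) \<le> (\<Sum>b\<in>B. \<bar>c b\<bar> * nrm \<Omega> (F b))"
proof (induction B rule: finite_induct)
  case empty
  have "nrm \<Omega> (\<lambda>x. 0) = 0" by (simp add: nrm_def ip_def)
  then show ?case by simp
next
  case (insert b B)
  have L1: "L2 \<Omega> (\<lambda>x. c b * F b x)" using insert by (intro L2_scale) auto
  have L2': "L2 \<Omega> (\<lambda>x. \<Sum>b\<in>B. c b * F b x)" using insert by (intro L2_sum L2_scale) auto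
  have "nrm \<Omega> (\<lambda>x. \<Sum>b\<in>insert b B. c b * F b x) = nrm \<Omega> (\<lambda>x. c b * F b x + (\<Sum>b\<in>B. c b * F b x))"
    using insert by simp
  also have "\<dots> \<le> nrm \<Omega> (\<lambda>x. c b * F b x) + nrm \<Omega> (\<lambda>x. \<Sum>b\<in>B. c b * F b x)"
    by (rule nrm_triangle[OF L1 L2'])
  also have "\<dots> \<le> \<bar>c b\<bar> * nrm \<Omega> (F b) + (\<Sum>b\<in>B. \<bar>c b\<bar> * nrm \<Omega> (F b))"
    using insert by (simp add: nrm_scale)
  finally show ?case using insert by simp
qed

lemma nrm_sum_lim:
  assumes B: "finite B" and L: "\<And>b n. b \<in> B \<Longrightarrow> L2 \<Omega> (F b n)"
    and lim: "\<And>b. b \<in> B \<Longrightarrow> (\<lambda>n. nrm \<Omega> (F b n)) \<longlonglongrightarrow> 0"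
  shows "(\<lambda>n. nrm \<Omega> (\<lambda>x. \<Sum>b\<in>B. c b * F b n x)) \<longlonglongrightarrow> 0"
proof (rule Lim_null_comparison)
  show "\<forall>\<^sub>F n in sequentially. norm (nrm \<Omega> (\<lambda>x. \<Sum>b\<in>B. c b * F b n x)) \<le> (\<Sum>b\<in>B. \<bar>c b\<bar> * nrm \<Omega> (F b n))"
  proof (intro always_eventually allI)
    fix n
    have "nrm \<Omega> (\<lambda>x. \<Sum>b\<in>B. c b * F b n x) \<le> (\<Sum>b\<in>B. \<bar>c b\<bar> * nrm \<Omega> (F b n))"
      using nrm_sum_bound[OF B, of \<Omega> "\<lambda>b. F b n" c] L by auto
    then show "norm (nrm \<Omega> (\<lambda>x. \<Sum>b\<in>B. c b * F b n x)) \<le> (\<Sum>b\<in>B. \<bar>c b\<bar> * nrm \<Omega> (F b n))"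
      using nrm_nonneg[of \<Omega> "\<lambda>x. \<Sum>b\<in>B. c b * F b n x"] by simp
  qed
  have "(\<lambda>n. \<Sum>b\<in>B. \<bar>c b\<bar> * nrm \<Omega> (F b n)) \<longlonglongrightarrow> (\<Sum>b\<in>B. \<bar>c b\<bar> * 0)"
    by (intro tendsto_sum tendsto_mult tendsto_const lim)
  then show "(\<lambda>n. \<Sum>b\<in>B. \<bar>c b\<bar> * nrm \<Omega> (F b n)) \<longlonglongrightarrow> 0" by simp
qed

lemma I4_L4norm: "(L4norm \<Omega> f) ^ 4 = I4 \<Omega> f"
proof -
  have a: "I4 \<Omega> f \<ge> 0" by (rule I4_nonneg)
  show ?thesis
  proof (cases "I4 \<Omega> f = 0")
    case True then show ?thesis by (simp add: L4norm_def I4_def[symmetric])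
  next
    case False
    with a have p: "I4 \<Omega> f > 0" by simp
    have "(I4 \<Omega> f powr (1/4)) ^ 4 = (I4 \<Omega> f powr (1/4)) powr (real 4)"
      using p by (intro powr_realpow[symmetric]) simp
    also have "\<dots> = I4 \<Omega> f" using p by (simp add: powr_powr)
    finally show ?thesis by (simp add: L4norm_def I4_def[symmetric])
  qed
qed

lemma L4norm_nonneg: "L4norm \<Omega> f \<ge> 0"
  by (simp add: L4norm_def)

lemma H1_L4:
  assumes s0: "\<forall>z. H1 \<Omega> z \<longrightarrow> integrable (lebesgue_on \<Omega>) (\<lambda>x. (z x) ^ 4) \<and> L4norm \<Omega> z \<le> s0 * H1norm \<Omega> z"
    and "H1 \<Omega> f"
  shows "L4 \<Omega> f"
proof -
  have "L2 \<Omega> f" using wgrad_fL2[OF wgrad_works[OF assms(2)]] .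
  then show ?thesis using s0 assms(2) by (simp add: L4_def L2_def)
qed



lemma tri_lim2:
  assumes f: "L4 \<Omega> f" and g: "L4 \<Omega> g" and k: "\<And>n. L2 \<Omega> (k n)"
    and k0: "(\<lambda>n. nrm \<Omega> (k n)) \<longlonglongrightarrow> 0"
  shows "(\<lambda>n. integral\<^sup>L (lebesgue_on \<Omega>) (\<lambda>x. f x * g x * k n x)) \<longlonglongrightarrow> 0"
proof (rule Lim_null_comparison)
  show "\<forall>\<^sub>F n in sequentially. norm (integral\<^sup>L (lebesgue_on \<Omega>) (\<lambda>x. f x * g x * k n x)) \<le> sqrt (sqrt (I4 \<Omega> f) * sqrt (I4 \<Omega> g)) * nrm \<Omega> (k n)"
    using tri_bound[OF f g k] by (intro always_eventually allI) simp
  have "(\<lambda>n. sqrt (sqrt (I4 \<Omega> f) * sqrt (I4 \<Omega> g)) * nrm \<Omega> (k n)) \<longlonglongrightarrow> sqrt (sqrt (I4 \<Omega> f) * sqrt (I4 \<Omega> g)) * 0"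
    by (intro tendsto_intros k0)
  then show "(\<lambda>n. sqrt (sqrt (I4 \<Omega> f) * sqrt (I4 \<Omega> g)) * nrm \<Omega> (k n)) \<longlonglongrightarrow> 0" by simp
qed

lemma L4_meas: "L4 \<Omega> f \<Longrightarrow> f \<in> borel_measurable (lebesgue_on \<Omega>)"
  by (simp add: L4_def)

lemma abstract_cancel:
  fixes w k :: "real^'d \<Rightarrow> real" and \<psi> p :: "nat \<Rightarrow> real^'d \<Rightarrow> real"
  assumes w: "L4 \<Omega> w" and e: "\<And>n. L4 \<Omega> (\<lambda>x. \<psi> n x - w x)" and k: "L2 \<Omega> k" and p: "\<And>n. L2 \<Omega> (p n)"
    and e0: "(\<lambda>n. I4 \<Omega> (\<lambda>x. \<psi> n x - w x)) \<longlonglongrightarrow> 0"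
    and p0: "(\<lambda>n. nrm \<Omega> (\<lambda>x. p n x - k x)) \<longlonglongrightarrow> 0"
    and ident: "\<And>n. 2 * integral\<^sup>L (lebesgue_on \<Omega>) (\<lambda>x. w x * \<psi> n x * p n x)
                     = - integral\<^sup>L (lebesgue_on \<Omega>) (\<lambda>x. k x * (\<psi> n x * \<psi> n x))"
  shows "integral\<^sup>L (lebesgue_on \<Omega>) (\<lambda>x. w x * w x * k x) = 0"
proof -
  define M where "M = lebesgue_on \<Omega>"
  define e where "e n x = \<psi> n x - w x" for n x
  define E where "E n x = p n x - k x" for n x
  have eL: "L4 \<Omega> (e n)" for n using e by (simp add: e_def[abs_def])
  have EL: "L2 \<Omega> (E n)" for n using p k by (simp add: E_def[abs_def] L2_diff)
  define A where "A = integral\<^sup>L M (\<lambda>x. w x * w x * k x)"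
  have iA: "integrable M (\<lambda>x. w x * w x * k x)" unfolding M_def by (rule tri_int[OF w w k])
  have T1: "integral\<^sup>L M (\<lambda>x. w x * \<psi> n x * p n x) =
      integral\<^sup>L M (\<lambda>x. e n x * w x * p n x) + integral\<^sup>L M (\<lambda>x. w x * w x * E n x) + A" for n
  proof -
    have i1: "integrable M (\<lambda>x. e n x * w x * p n x)" unfolding M_def by (rule tri_int[OF eL w p])
    have i2: "integrable M (\<lambda>x. w x * w x * E n x)" unfolding M_def by (rule tri_int[OF w w EL])
    have "(\<lambda>x. w x * \<psi> n x * p n x) = (\<lambda>x. e n x * w x * p n x + w x * w x * E n x + w x * w x * k x)"
      by (auto simp: e_def E_def algebra_simps)
    then show ?thesis using i1 i2 iA by (simp add: A_def)
  qed
  have kb: "eventually (\<lambda>n. nrm \<Omega> (p n) \<le> 1 + nrm \<Omega> k) sequentially"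
  proof -
    have "eventually (\<lambda>n. nrm \<Omega> (E n) < 1) sequentially"
      using p0 by (simp add: E_def[abs_def] order_tendstoD(2))
    then show ?thesis
    proof eventually_elim
      case (elim n)
      have "p n = (\<lambda>x. E n x + k x)" by (auto simp: E_def)
      then have "nrm \<Omega> (p n) \<le> nrm \<Omega> (E n) + nrm \<Omega> k" using nrm_triangle[OF EL k] by simp
      then show ?case using elim by simp
    qed
  qed
  have l1: "(\<lambda>n. integral\<^sup>L M (\<lambda>x. e n x * w x * p n x)) \<longlonglongrightarrow> 0"
    unfolding M_def
    by (rule tri_lim[OF eL w p, where B="I4 \<Omega> w" and C="1 + nrm \<Omega> k"])
       (use e0 kb in \<open>auto simp: e_def[abs_def]\<close>)
  have l2: "(\<lambda>n. integral\<^sup>L M (\<lambda>x. w x * w x * E n x)) \<longlonglongrightarrow> 0"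
    unfolding M_def by (rule tri_lim2[OF w w EL]) (use p0 in \<open>simp add: E_def[abs_def]\<close>)
  have lim1: "(\<lambda>n. integral\<^sup>L M (\<lambda>x. w x * \<psi> n x * p n x)) \<longlonglongrightarrow> A"
    unfolding T1 using tendsto_add[OF tendsto_add[OF l1 l2] tendsto_const[of A]] by simp
  have T2: "integral\<^sup>L M (\<lambda>x. k x * (\<psi> n x * \<psi> n x)) =
      integral\<^sup>L M (\<lambda>x. e n x * e n x * k x) + 2 * integral\<^sup>L M (\<lambda>x. e n x * w x * k x) + A" for n
  proof -
    have i1: "integrable M (\<lambda>x. e n x * e n x * k x)" unfolding M_def by (rule tri_int[OF eL eL k])
    have i2: "integrable M (\<lambda>x. e n x * w x * k x)" unfolding M_def by (rule tri_int[OF eL w k])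
    have "(\<lambda>x. k x * (\<psi> n x * \<psi> n x)) = (\<lambda>x. e n x * e n x * k x + 2 * (e n x * w x * k x) + w x * w x * k x)"
      by (auto simp: e_def algebra_simps)
    then show ?thesis using i1 i2 iA by (simp add: A_def)
  qed
  have eb: "eventually (\<lambda>n. I4 \<Omega> (e n) \<le> 1) sequentially"
  proof -
    have "eventually (\<lambda>n. I4 \<Omega> (e n) < 1) sequentially"
      using order_tendstoD(2)[OF e0, of 1] by (simp add: e_def[abs_def])
    then show ?thesis by (rule eventually_mono) simp
  qed
  have kb2: "eventually (\<lambda>n. nrm \<Omega> k \<le> nrm \<Omega> k) sequentially" by simp
  have l3: "(\<lambda>n. integral\<^sup>L M (\<lambda>x. e n x * e n x * k x)) \<longlonglongrightarrow> 0"
    unfolding M_def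
    by (rule tri_lim[OF eL eL k, where B=1 and C="nrm \<Omega> k"]) (use e0 eb in \<open>auto simp: e_def[abs_def]\<close>)
  have l4: "(\<lambda>n. integral\<^sup>L M (\<lambda>x. e n x * w x * k x)) \<longlonglongrightarrow> 0"
    unfolding M_def
    by (rule tri_lim[OF eL w k, where B="I4 \<Omega> w" and C="nrm \<Omega> k"]) (use e0 in \<open>auto simp: e_def[abs_def]\<close>)
  have lim2: "(\<lambda>n. integral\<^sup>L M (\<lambda>x. k x * (\<psi> n x * \<psi> n x))) \<longlonglongrightarrow> A"
    unfolding T2 using tendsto_add[OF tendsto_add[OF l3 tendsto_mult[OF tendsto_const[of 2] l4]] tendsto_const[of A]] by simp
  have "(\<lambda>n. 2 * integral\<^sup>L M (\<lambda>x. w x * \<psi> n x * p n x)) \<longlonglongrightarrow> 2 * A"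
    by (intro tendsto_mult tendsto_const lim1)
  moreover have "(\<lambda>n. 2 * integral\<^sup>L M (\<lambda>x. w x * \<psi> n x * p n x)) \<longlonglongrightarrow> - A"
    unfolding M_def ident using tendsto_minus[OF lim2] by (simp add: M_def)
  ultimately have "2 * A = - A" by (rule LIMSEQ_unique)
  then show ?thesis by (simp add: A_def M_def)
qed



lemma H10_H1: "H10 \<Omega> f \<Longrightarrow> H1 \<Omega> f" by (simp add: H10_def)

lemma cancel:
  fixes Bs :: "(real^'d \<Rightarrow> real) set" and c :: "(real^'d \<Rightarrow> real) \<Rightarrow> real" and v :: "real^'d"
  assumes \<Omega>: "open \<Omega>" "bounded \<Omega>"
    and s0: "\<forall>z. H1 \<Omega> z \<longrightarrow> integrable (lebesgue_on \<Omega>) (\<lambda>x. (z x) ^ 4) \<and> L4norm \<Omega> z \<le> s0 * H1norm \<Omega> z"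
    and B: "finite Bs" "\<forall>b\<in>Bs. H10 \<Omega> b"
    and wdef: "w = (\<lambda>x. \<Sum>b\<in>Bs. c b * b x)"
  shows "ip \<Omega> (\<lambda>x. w x * vgrad \<Omega> v w x) w = 0"
proof -
  have "\<forall>b\<in>Bs. \<exists>\<phi>s. (\<forall>n. test_fun \<Omega> (\<phi>s n)) \<and>
      (\<lambda>n. nrm \<Omega> (\<lambda>x. \<phi>s n x - b x)) \<longlonglongrightarrow> 0 \<and>
      (\<forall>i. (\<lambda>n. nrm \<Omega> (\<lambda>x. pd i (\<phi>s n) x - wgrad \<Omega> b i x)) \<longlonglongrightarrow> 0)"
    using B(2) by (simp add: H10_def)
  then have "\<exists>\<phi>s. \<forall>b\<in>Bs. (\<forall>n. test_fun \<Omega> (\<phi>s b n)) \<and>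
      (\<lambda>n. nrm \<Omega> (\<lambda>x. \<phi>s b n x - b x)) \<longlonglongrightarrow> 0 \<and>
      (\<forall>i. (\<lambda>n. nrm \<Omega> (\<lambda>x. pd i (\<phi>s b n) x - wgrad \<Omega> b i x)) \<longlonglongrightarrow> 0)"
    by (rule bchoice)
  then obtain \<phi>s where \<phi>s0: "\<forall>b\<in>Bs. (\<forall>n. test_fun \<Omega> (\<phi>s b n)) \<and>
      (\<lambda>n. nrm \<Omega> (\<lambda>x. \<phi>s b n x - b x)) \<longlonglongrightarrow> 0 \<and>
      (\<forall>i. (\<lambda>n. nrm \<Omega> (\<lambda>x. pd i (\<phi>s b n) x - wgrad \<Omega> b i x)) \<longlonglongrightarrow> 0)"
    by (elim exE)
  have \<phi>s: "\<And>b. b \<in> Bs \<Longrightarrow> (\<forall>n. test_fun \<Omega> (\<phi>s b n)) \<and>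
      (\<lambda>n. nrm \<Omega> (\<lambda>x. \<phi>s b n x - b x)) \<longlonglongrightarrow> 0 \<and>
      (\<forall>i. (\<lambda>n. nrm \<Omega> (\<lambda>x. pd i (\<phi>s b n) x - wgrad \<Omega> b i x)) \<longlonglongrightarrow> 0)"
    using \<phi>s0 by (rule bspec)
  have tf: "\<And>b n. b \<in> Bs \<Longrightarrow> test_fun \<Omega> (\<phi>s b n)" using \<phi>s by blast
  define W where "W b = wgrad \<Omega> b" for b
  have Wb: "\<And>b. b \<in> Bs \<Longrightarrow> is_wgrad \<Omega> b (W b)"
    unfolding W_def using B(2) by (intro wgrad_works H10_H1) simp
  have bL: "\<And>b. b \<in> Bs \<Longrightarrow> L2 \<Omega> b" using Wb wgrad_fL2 by blast
  have WL: "\<And>b i. b \<in> Bs \<Longrightarrow> L2 \<Omega> (W b i)" using Wb wgrad_L2 by blast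
  define H where "H = (\<lambda>i x. \<Sum>b\<in>Bs. c b * W b i x)"
  have wH: "is_wgrad \<Omega> w H"
    unfolding wdef H_def by (rule wgrad_sum[OF \<Omega>(1) B(1)]) (use Wb in auto)
  have HL: "L2 \<Omega> (H i)" for i using wH wgrad_L2 by blast
  have wL: "L2 \<Omega> w" using wH wgrad_fL2 by blast
  have H1w: "H1 \<Omega> w" using wH by (auto simp: H1_def)
  have w4: "L4 \<Omega> w" by (rule H1_L4[OF s0 H1w])
  define G where "G = wgrad \<Omega> w"
  have wG: "is_wgrad \<Omega> w G" unfolding G_def by (rule wgrad_works[OF H1w])
  have GL: "L2 \<Omega> (G i)" for i using wG wgrad_L2 by blast
  have GH: "AE x in lebesgue_on \<Omega>. G i x = H i x" for i by (rule wgrad_unique[OF \<Omega> wG wH])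
  define \<psi> where "\<psi> n = (\<lambda>x. \<Sum>b\<in>Bs. c b * \<phi>s b n x)" for n
  have t\<psi>: "test_fun \<Omega> (\<psi> n)" for n
    unfolding \<psi>_def using tf by (intro tf_sum[OF B(1)] tf_scale) auto
  have \<psi>L: "L2 \<Omega> (\<psi> n)" for n by (rule tf_L2[OF \<Omega>(1) t\<psi>])
  have pd\<psi>: "pd i (\<psi> n) = (\<lambda>x. \<Sum>b\<in>Bs. c b * pd i (\<phi>s b n) x)" for i n
  proof -
    have D: "Dif (\<lambda>x. c b * \<phi>s b n x)" if "b \<in> Bs" for b
      using tf_Dif[OF tf[OF that]] by (auto intro: differentiable_mult)
    have "pd i (\<psi> n) = (\<lambda>x. \<Sum>b\<in>Bs. pd i (\<lambda>x. c b * \<phi>s b n x) x)"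
      unfolding \<psi>_def by (rule pd_sum_fun[OF B(1)]) (use D in auto)
    also have "\<dots> = (\<lambda>x. \<Sum>b\<in>Bs. c b * pd i (\<phi>s b n) x)"
      using tf_Dif[OF tf] by (simp add: pd_scale_fun)
    finally show ?thesis .
  qed
  have pL: "L2 \<Omega> (pd i (\<psi> n))" for i n by (rule tf_L2[OF \<Omega>(1) tf_pd[OF t\<psi>]])
  define e where "e n = (\<lambda>x. \<psi> n x - w x)" for n
  define E where "E n = (\<lambda>i x. pd i (\<psi> n) x - H i x)" for n
  have eL: "L2 \<Omega> (e n)" for n unfolding e_def using \<psi>L wL by (rule L2_diff)
  have EL: "L2 \<Omega> (E n i)" for n i unfolding E_def using pL HL by (rule L2_diff)
  have e_alt: "e n = (\<lambda>x. \<Sum>b\<in>Bs. c b * (\<phi>s b n x - b x))" for n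
    by (auto simp: e_def \<psi>_def wdef sum_subtractf[symmetric] right_diff_distrib)
  have E_alt: "E n i = (\<lambda>x. \<Sum>b\<in>Bs. c b * (pd i (\<phi>s b n) x - W b i x))" for n i
    by (auto simp: E_def pd\<psi> H_def sum_subtractf[symmetric] right_diff_distrib)
  have e_lim: "(\<lambda>n. nrm \<Omega> (e n)) \<longlonglongrightarrow> 0"
    unfolding e_alt
  proof (rule nrm_sum_lim[OF B(1), where F="\<lambda>b n x. \<phi>s b n x - b x"])
    fix b n assume b: "b \<in> Bs"
    show "L2 \<Omega> (\<lambda>x. \<phi>s b n x - b x)" using tf_L2[OF \<Omega>(1) tf[OF b]] bL[OF b] by (rule L2_diff)
  next
    fix b assume b: "b \<in> Bs"
    show "(\<lambda>n. nrm \<Omega> (\<lambda>x. \<phi>s b n x - b x)) \<longlonglongrightarrow> 0" using \<phi>s[OF b] by blast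
  qed
  have E_lim: "(\<lambda>n. nrm \<Omega> (E n i)) \<longlonglongrightarrow> 0" for i
    unfolding E_alt
  proof (rule nrm_sum_lim[OF B(1), where F="\<lambda>b n x. pd i (\<phi>s b n) x - W b i x"])
    fix b n assume b: "b \<in> Bs"
    show "L2 \<Omega> (\<lambda>x. pd i (\<phi>s b n) x - W b i x)"
      using tf_L2[OF \<Omega>(1) tf_pd[OF tf[OF b]]] WL[OF b] by (rule L2_diff)
  next
    fix b assume b: "b \<in> Bs"
    show "(\<lambda>n. nrm \<Omega> (\<lambda>x. pd i (\<phi>s b n) x - W b i x)) \<longlonglongrightarrow> 0" using \<phi>s[OF b] by (simp add: W_def)
  qed
  have eW: "is_wgrad \<Omega> (e n) (E n)" for n
  proof -
    have "is_wgrad \<Omega> (\<lambda>x. 1 * \<psi> n x + (-1) * w x) (\<lambda>i x. 1 * pd i (\<psi> n) x + (-1) * H i x)"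
      by (rule wgrad_lin[OF \<Omega>(1) tf_wgrad[OF \<Omega>(1) t\<psi>] wH])
    then show ?thesis by (simp add: e_def E_def)
  qed
  have H1e: "H1 \<Omega> (e n)" for n using eW by (auto simp: H1_def)
  have e4: "L4 \<Omega> (e n)" for n by (rule H1_L4[OF s0 H1e])
  have nrmW: "nrm \<Omega> (wgrad \<Omega> (e n) i) = nrm \<Omega> (E n i)" for n i
  proof (rule nrm_ae)
    show "AE x in lebesgue_on \<Omega>. wgrad \<Omega> (e n) i x = E n i x"
      by (rule wgrad_unique[OF \<Omega> wgrad_works[OF H1e] eW])
    show "wgrad \<Omega> (e n) i \<in> borel_measurable (lebesgue_on \<Omega>)"
      using wgrad_L2[OF wgrad_works[OF H1e]] by (simp add: L2_def)
    show "E n i \<in> borel_measurable (lebesgue_on \<Omega>)" using EL by (simp add: L2_def)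
  qed
  have H1n: "(\<lambda>n. H1norm \<Omega> (e n)) \<longlonglongrightarrow> 0"
  proof -
    have "(\<lambda>n. sqrt ((nrm \<Omega> (e n))\<^sup>2 + (\<Sum>i\<in>UNIV. (nrm \<Omega> (E n i))\<^sup>2))) \<longlonglongrightarrow> sqrt (0\<^sup>2 + (\<Sum>i\<in>(UNIV::'d set). 0\<^sup>2))"
      by (intro tendsto_intros e_lim E_lim)
    then show ?thesis by (simp add: H1norm_def nrmW)
  qed
  have L4n: "(\<lambda>n. L4norm \<Omega> (e n)) \<longlonglongrightarrow> 0"
  proof (rule tendsto_sandwich[where f="\<lambda>n. 0" and h="\<lambda>n. s0 * H1norm \<Omega> (e n)"])
    show "\<forall>\<^sub>F n in sequentially. 0 \<le> L4norm \<Omega> (e n)" by (simp add: L4norm_nonneg)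
    show "\<forall>\<^sub>F n in sequentially. L4norm \<Omega> (e n) \<le> s0 * H1norm \<Omega> (e n)" using s0 H1e by simp
    show "(\<lambda>n. 0) \<longlonglongrightarrow> (0::real)" by simp
    have "(\<lambda>n. s0 * H1norm \<Omega> (e n)) \<longlonglongrightarrow> s0 * 0" by (intro tendsto_intros H1n)
    then show "(\<lambda>n. s0 * H1norm \<Omega> (e n)) \<longlonglongrightarrow> 0" by simp
  qed
  have I4e: "(\<lambda>n. I4 \<Omega> (e n)) \<longlonglongrightarrow> 0"
  proof -
    have "(\<lambda>n. (L4norm \<Omega> (e n)) ^ 4) \<longlonglongrightarrow> 0 ^ 4" by (intro tendsto_intros L4n)
    then show ?thesis by (simp add: I4_L4norm)
  qed
  have key: "integral\<^sup>L (lebesgue_on \<Omega>) (\<lambda>x. w x * w x * H i x) = 0" for i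
  proof (rule abstract_cancel[OF w4 _ HL pL])
    show "L4 \<Omega> (\<lambda>x. \<psi> n x - w x)" for n using e4 by (simp add: e_def)
    show "(\<lambda>n. I4 \<Omega> (\<lambda>x. \<psi> n x - w x)) \<longlonglongrightarrow> 0" using I4e by (simp add: e_def)
    show "(\<lambda>n. nrm \<Omega> (\<lambda>x. pd i (\<psi> n) x - H i x)) \<longlonglongrightarrow> 0" using E_lim by (simp add: E_def)
    fix n
    have tt: "test_fun \<Omega> (\<lambda>x. \<psi> n x * \<psi> n x)"
      using tf_mult[OF t\<psi>] t\<psi> by (simp add: tf_iff)
    have "ip \<Omega> w (pd i (\<lambda>x. \<psi> n x * \<psi> n x)) = - ip \<Omega> (H i) (\<lambda>x. \<psi> n x * \<psi> n x)"
      using wH tt by (simp add: is_wgrad_def)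
    moreover have "pd i (\<lambda>x. \<psi> n x * \<psi> n x) = (\<lambda>x. pd i (\<psi> n) x * \<psi> n x + \<psi> n x * pd i (\<psi> n) x)"
      by (rule pd_mult_fun[OF tf_Dif[OF t\<psi>] tf_Dif[OF t\<psi>]])
    moreover have "ip \<Omega> w (\<lambda>x. pd i (\<psi> n) x * \<psi> n x + \<psi> n x * pd i (\<psi> n) x)
        = 2 * integral\<^sup>L (lebesgue_on \<Omega>) (\<lambda>x. w x * \<psi> n x * pd i (\<psi> n) x)"
    proof -
      have "(\<lambda>x. w x * (pd i (\<psi> n) x * \<psi> n x + \<psi> n x * pd i (\<psi> n) x)) = (\<lambda>x. 2 * (w x * \<psi> n x * pd i (\<psi> n) x))"
        by (auto simp: algebra_simps)
      then show ?thesis by (simp add: ip_def)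
    qed
    ultimately show "2 * integral\<^sup>L (lebesgue_on \<Omega>) (\<lambda>x. w x * \<psi> n x * pd i (\<psi> n) x)
        = - integral\<^sup>L (lebesgue_on \<Omega>) (\<lambda>x. H i x * (\<psi> n x * \<psi> n x))"
      by (simp add: ip_def)
  qed
  have keyG: "integral\<^sup>L (lebesgue_on \<Omega>) (\<lambda>x. w x * w x * G i x) = 0" for i
  proof -
    have mw: "w \<in> borel_measurable (lebesgue_on \<Omega>)" using wL by (simp add: L2_def)
    have "integral\<^sup>L (lebesgue_on \<Omega>) (\<lambda>x. w x * w x * G i x) = integral\<^sup>L (lebesgue_on \<Omega>) (\<lambda>x. w x * w x * H i x)"
    proof (rule integral_cong_AE)
      show "(\<lambda>x. w x * w x * G i x) \<in> borel_measurable (lebesgue_on \<Omega>)"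
        using mw GL[of i] by (intro borel_measurable_times) (auto simp: L2_def)
      show "(\<lambda>x. w x * w x * H i x) \<in> borel_measurable (lebesgue_on \<Omega>)"
        using mw HL[of i] by (intro borel_measurable_times) (auto simp: L2_def)
      show "AE x in lebesgue_on \<Omega>. w x * w x * G i x = w x * w x * H i x"
        using GH[of i] by eventually_elim simp
    qed
    then show ?thesis using key by simp
  qed
  have "ip \<Omega> (\<lambda>x. w x * vgrad \<Omega> v w x) w = integral\<^sup>L (lebesgue_on \<Omega>) (\<lambda>x. \<Sum>i\<in>UNIV. v $ i * (w x * w x * G i x))"
    unfolding ip_def vgrad_def G_def by (rule arg_cong[where f="integral\<^sup>L _"]) (auto simp: sum_distrib_left sum_distrib_right algebra_simps)
  also have "\<dots> = (\<Sum>i\<in>UNIV. v $ i * integral\<^sup>L (lebesgue_on \<Omega>) (\<lambda>x. w x * w x * G i x))"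
    using tri_int[OF w4 w4 GL] by (simp add: integral_sum)
  also have "\<dots> = 0" by (simp add: keyG)
  finally show ?thesis .
qed



section \<open>Finite spans and projection\<close>

lemma fspan_iff: "u \<in> fspan B \<longleftrightarrow> (\<exists>c. u = (\<lambda>x. \<Sum>b\<in>B. c b * b x))"
  by (auto simp: fspan_def)

lemma fspan_L2: "finite B \<Longrightarrow> (\<And>b. b \<in> B \<Longrightarrow> L2 \<Omega> b) \<Longrightarrow> u \<in> fspan B \<Longrightarrow> L2 \<Omega> u"
  unfolding fspan_iff by (auto intro!: L2_sum L2_scale)

lemma fspan_lin:
  assumes "u \<in> fspan B" "v \<in> fspan B"
  shows "(\<lambda>x. a * u x + b * v x) \<in> fspan B"
proof -
  obtain c d where "u = (\<lambda>x. \<Sum>b\<in>B. c b * b x)" "v = (\<lambda>x. \<Sum>b\<in>B. d b * b x)"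
    using assms by (auto simp: fspan_iff)
  then have "(\<lambda>x. a * u x + b * v x) = (\<lambda>x. \<Sum>b'\<in>B. (a * c b' + b * d b') * b' x)"
    by (auto simp: sum_distrib_left sum.distrib[symmetric] algebra_simps)
  then show ?thesis by (auto simp: fspan_iff)
qed

lemma fspan_diff: "u \<in> fspan B \<Longrightarrow> v \<in> fspan B \<Longrightarrow> (\<lambda>x. u x - v x) \<in> fspan B"
  using fspan_lin[of u B v 1 "-1"] by simp

lemma fspan_add: "u \<in> fspan B \<Longrightarrow> v \<in> fspan B \<Longrightarrow> (\<lambda>x. u x + v x) \<in> fspan B"
  using fspan_lin[of u B v 1 1] by simp

lemma fspan_zero: "(\<lambda>x. 0) \<in> fspan B"
  unfolding fspan_iff by (intro exI[of _ "\<lambda>b. 0"]) simp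

lemma fspan_elem:
  assumes "finite B" "b \<in> B"
  shows "b \<in> fspan B"
proof -
  have "(\<lambda>x. \<Sum>b'\<in>B. (if b' = b then 1 else 0) * b' x) = b"
  proof
    fix x
    have "(\<Sum>b'\<in>B. (if b' = b then 1 else 0) * b' x) = (\<Sum>b'\<in>B. if b' = b then b x else 0)"
      by (rule sum.cong) auto
    also have "\<dots> = b x" using assms by simp
    finally show "(\<Sum>b'\<in>B. (if b' = b then 1 else 0) * b' x) = b x" .
  qed
  then have eq: "b = (\<lambda>x. \<Sum>b'\<in>B. (if b' = b then 1 else 0) * b' x)" by (rule sym)
  show ?thesis unfolding fspan_iff by (rule exI[of _ "\<lambda>b'. if b' = b then 1 else 0"], rule eq)
qed

lemma fspan_mono:
  assumes "finite B'" "B \<subseteq> B'" "u \<in> fspan B"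
  shows "u \<in> fspan B'"
proof -
  obtain c where u: "u = (\<lambda>x. \<Sum>b\<in>B. c b * b x)" using assms(3) by (auto simp: fspan_iff)
  have "(\<lambda>x. \<Sum>b\<in>B'. (if b \<in> B then c b else 0) * b x) = u"
  proof
    fix x
    have "(\<Sum>b\<in>B'. (if b \<in> B then c b else 0) * b x) = (\<Sum>b\<in>B'. if b \<in> B then c b * b x else 0)"
      by (rule sum.cong) auto
    also have "\<dots> = (\<Sum>b\<in>B' \<inter> B. c b * b x)" using assms(1) by (simp add: sum.inter_restrict)
    also have "B' \<inter> B = B" using assms(2) by blast
    finally show "(\<Sum>b\<in>B'. (if b \<in> B then c b else 0) * b x) = u x" by (simp add: u)
  qed
  then have eq: "u = (\<lambda>x. \<Sum>b\<in>B'. (if b \<in> B then c b else 0) * b x)" by (rule sym)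
  show ?thesis unfolding fspan_iff by (rule exI[of _ "\<lambda>b. if b \<in> B then c b else 0"], rule eq)
qed

lemma ip_sum2:
  assumes "finite B" "L2 \<Omega> g" "\<And>b. b \<in> B \<Longrightarrow> L2 \<Omega> (F b)"
  shows "ip \<Omega> g (\<lambda>x. \<Sum>b\<in>B. c b * F b x) = (\<Sum>b\<in>B. c b * ip \<Omega> g (F b))"
proof -
  have "ip \<Omega> g (\<lambda>x. \<Sum>b\<in>B. c b * F b x) = integral\<^sup>L (lebesgue_on \<Omega>) (\<lambda>x. \<Sum>b\<in>B. c b * (g x * F b x))"
    unfolding ip_def by (simp add: sum_distrib_left algebra_simps)
  also have "\<dots> = (\<Sum>b\<in>B. c b * ip \<Omega> g (F b))"
    using assms L2_prod_int[OF assms(2) assms(3)] by (simp add: integral_sum ip_def)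
  finally show ?thesis .
qed

lemma orth_span:
  assumes "finite B" "\<And>b. b \<in> B \<Longrightarrow> L2 \<Omega> b" "L2 \<Omega> g" "\<And>b. b \<in> B \<Longrightarrow> ip \<Omega> g b = 0" "u \<in> fspan B"
  shows "ip \<Omega> g u = 0"
proof -
  obtain c where u: "u = (\<lambda>x. \<Sum>b\<in>B. c b * b x)" using assms(5) by (auto simp: fspan_iff)
  show ?thesis unfolding u using assms by (simp add: ip_sum2)
qed

lemma proj_ex_aux:
  assumes "finite B" "\<And>b. b \<in> B \<Longrightarrow> L2 \<Omega> b"
  shows "L2 \<Omega> f \<Longrightarrow> \<exists>u\<in>fspan B. \<forall>b\<in>B. ip \<Omega> (\<lambda>x. f x - u x) b = 0"
  using assms
proof (induction B arbitrary: f rule: finite_induct)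
  case empty then show ?case using fspan_zero by blast
next
  case (insert b B)
  have BL: "\<And>b'. b' \<in> B \<Longrightarrow> L2 \<Omega> b'" using insert by auto
  have bL: "L2 \<Omega> b" using insert by auto
  have fin': "finite (insert b B)" using insert by simp
  have spanL: "\<And>u. u \<in> fspan B \<Longrightarrow> L2 \<Omega> u" by (rule fspan_L2[OF insert.hyps(1) BL])
  obtain u0 where u0: "u0 \<in> fspan B" "\<forall>b'\<in>B. ip \<Omega> (\<lambda>x. f x - u0 x) b' = 0"
    using insert.IH[OF insert.prems(1) BL] by blast
  obtain ub where ub: "ub \<in> fspan B" "\<forall>b'\<in>B. ip \<Omega> (\<lambda>x. b x - ub x) b' = 0"
    using insert.IH[OF bL BL] by blast
  define w where "w = (\<lambda>x. b x - ub x)"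
  have u0L: "L2 \<Omega> u0" using spanL u0(1) .
  have ubL: "L2 \<Omega> ub" using spanL ub(1) .
  have wL: "L2 \<Omega> w" unfolding w_def using bL ubL by (rule L2_diff)
  have fu0L: "L2 \<Omega> (\<lambda>x. f x - u0 x)" using insert.prems(1) u0L by (rule L2_diff)
  have w_orth: "\<forall>b'\<in>B. ip \<Omega> w b' = 0" using ub(2) by (simp add: w_def)
  have fu0_ub: "ip \<Omega> (\<lambda>x. f x - u0 x) ub = 0"
    by (rule orth_span[OF insert.hyps(1) BL fu0L _ ub(1)]) (use u0(2) in auto)
  have w_ub: "ip \<Omega> w ub = 0"
    by (rule orth_span[OF insert.hyps(1) BL wL _ ub(1)]) (use w_orth in auto)
  have b_eq: "b = (\<lambda>x. ub x + w x)" by (auto simp: w_def)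
  have mono: "\<And>u. u \<in> fspan B \<Longrightarrow> u \<in> fspan (insert b B)"
  proof -
    fix u assume "u \<in> fspan B"
    moreover have "B \<subseteq> insert b B" by blast
    ultimately show "u \<in> fspan (insert b B)" using fspan_mono[OF fin'] by blast
  qed
  have w_span: "w \<in> fspan (insert b B)"
    unfolding w_def using fspan_elem[OF fin', of b] mono[OF ub(1)] by (intro fspan_diff) auto
  show ?case
  proof (cases "ip \<Omega> w w = 0")
    case True
    have nw: "nrm \<Omega> w = 0" using True by (simp add: nrm_def)
    have "\<bar>ip \<Omega> (\<lambda>x. f x - u0 x) w\<bar> \<le> nrm \<Omega> (\<lambda>x. f x - u0 x) * nrm \<Omega> w" by (rule CS[OF fu0L wL])
    then have fw: "ip \<Omega> (\<lambda>x. f x - u0 x) w = 0" using nw by simp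
    have "ip \<Omega> (\<lambda>x. f x - u0 x) b = ip \<Omega> (\<lambda>x. f x - u0 x) ub + ip \<Omega> (\<lambda>x. f x - u0 x) w"
      unfolding b_eq by (rule ip_add2[OF ubL wL fu0L])
    then have "ip \<Omega> (\<lambda>x. f x - u0 x) b = 0" using fu0_ub fw by simp
    then show ?thesis using u0 mono by blast
  next
    case False
    define \<alpha> where "\<alpha> = ip \<Omega> (\<lambda>x. f x - u0 x) w / ip \<Omega> w w"
    define u where "u = (\<lambda>x. 1 * u0 x + \<alpha> * w x)"
    have u_span: "u \<in> fspan (insert b B)" unfolding u_def using mono[OF u0(1)] w_span by (rule fspan_lin)
    have fu: "(\<lambda>x. f x - u x) = (\<lambda>x. 1 * (f x - u0 x) + (- \<alpha>) * w x)" by (auto simp: u_def)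
    have fuL: "L2 \<Omega> (\<lambda>x. f x - u x)" unfolding fu using fu0L wL by (rule L2_lin)
    have o1: "ip \<Omega> (\<lambda>x. f x - u x) b' = 0" if "b' \<in> B" for b'
    proof -
      have "ip \<Omega> (\<lambda>x. f x - u x) b' = 1 * ip \<Omega> (\<lambda>x. f x - u0 x) b' + (- \<alpha>) * ip \<Omega> w b'"
        unfolding fu using fu0L wL BL[OF that] by (rule ip_lin1)
      then show ?thesis using u0(2) w_orth that by simp
    qed
    have o2: "ip \<Omega> (\<lambda>x. f x - u x) w = 0"
    proof -
      have "ip \<Omega> (\<lambda>x. f x - u x) w = 1 * ip \<Omega> (\<lambda>x. f x - u0 x) w + (- \<alpha>) * ip \<Omega> w w"
        unfolding fu using fu0L wL wL by (rule ip_lin1)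
      then show ?thesis using False by (simp add: \<alpha>_def)
    qed
    have o3: "ip \<Omega> (\<lambda>x. f x - u x) ub = 0"
      by (rule orth_span[OF insert.hyps(1) BL fuL _ ub(1)]) (use o1 in auto)
    have "ip \<Omega> (\<lambda>x. f x - u x) b = ip \<Omega> (\<lambda>x. f x - u x) ub + ip \<Omega> (\<lambda>x. f x - u x) w"
      unfolding b_eq by (rule ip_add2[OF ubL wL fuL])
    then have "ip \<Omega> (\<lambda>x. f x - u x) b = 0" using o2 o3 by simp
    then show ?thesis using o1 u_span by blast
  qed
qed

lemma proj_props:
  assumes "finite B" "\<And>b. b \<in> B \<Longrightarrow> L2 \<Omega> b" "L2 \<Omega> f"
  shows "proj \<Omega> (fspan B) f \<in> fspan B \<and> (\<forall>\<phi>\<in>fspan B. ip \<Omega> (\<lambda>x. f x - proj \<Omega> (fspan B) f x) \<phi> = 0)"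
proof -
  obtain u where u: "u \<in> fspan B" "\<forall>b\<in>B. ip \<Omega> (\<lambda>x. f x - u x) b = 0"
    using proj_ex_aux[OF assms(1,2) assms(3)] by blast
  have uL: "L2 \<Omega> u" using fspan_L2[OF assms(1,2) u(1)] .
  have "\<forall>\<phi>\<in>fspan B. ip \<Omega> (\<lambda>x. f x - u x) \<phi> = 0"
    using orth_span[OF assms(1,2) L2_diff[OF assms(3) uL]] u(2) by blast
  with u(1) have "\<exists>u. u \<in> fspan B \<and> (\<forall>\<phi>\<in>fspan B. ip \<Omega> (\<lambda>x. f x - u x) \<phi> = 0)" by blast
  then show ?thesis unfolding proj_def by (rule someI_ex)
qed

lemma proj_nrm:
  assumes "finite B" "\<And>b. b \<in> B \<Longrightarrow> L2 \<Omega> b" "L2 \<Omega> f"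
  shows "nrm \<Omega> (proj \<Omega> (fspan B) f) \<le> nrm \<Omega> f"
proof -
  let ?p = "proj \<Omega> (fspan B) f"
  have p: "?p \<in> fspan B" "\<forall>\<phi>\<in>fspan B. ip \<Omega> (\<lambda>x. f x - ?p x) \<phi> = 0"
    using proj_props[OF assms] by auto
  have pL: "L2 \<Omega> ?p" using fspan_L2[OF assms(1,2) p(1)] .
  have "ip \<Omega> (\<lambda>x. f x - ?p x) ?p = 0" using p by blast
  then have "ip \<Omega> f ?p = ip \<Omega> ?p ?p" using ip_diff1[OF assms(3) pL pL] by simp
  then have "(nrm \<Omega> ?p)\<^sup>2 \<le> nrm \<Omega> f * nrm \<Omega> ?p"
    using CS[OF assms(3) pL] by (simp add: nrm_sq)
  then have "nrm \<Omega> ?p * nrm \<Omega> ?p \<le> nrm \<Omega> f * nrm \<Omega> ?p" by (simp add: power2_eq_square)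
  then show ?thesis using nrm_nonneg[of \<Omega> ?p] nrm_nonneg[of \<Omega> f]
    by (cases "nrm \<Omega> ?p = 0") (auto simp: mult_le_cancel_right)
qed



lemma quad_expand:
  assumes a: "L2 \<Omega> a" and g: "L2 \<Omega> g"
  shows "ip \<Omega> (\<lambda>x. a x + s * g x) (\<lambda>x. a x + s * g x) = ip \<Omega> a a + 2 * s * ip \<Omega> a g + s\<^sup>2 * ip \<Omega> g g"
proof -
  have L: "L2 \<Omega> (\<lambda>x. 1 * a x + s * g x)" using a g by (rule L2_lin)
  have "ip \<Omega> (\<lambda>x. 1 * a x + s * g x) (\<lambda>x. 1 * a x + s * g x) =
      1 * ip \<Omega> a (\<lambda>x. 1 * a x + s * g x) + s * ip \<Omega> g (\<lambda>x. 1 * a x + s * g x)"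
    by (rule ip_lin1[OF a g L])
  also have "ip \<Omega> a (\<lambda>x. 1 * a x + s * g x) = 1 * ip \<Omega> a a + s * ip \<Omega> a g" by (rule ip_lin2[OF a g a])
  also have "ip \<Omega> g (\<lambda>x. 1 * a x + s * g x) = 1 * ip \<Omega> g a + s * ip \<Omega> g g" by (rule ip_lin2[OF a g g])
  finally show ?thesis by (simp add: ip_sym[of \<Omega> g a] power2_eq_square algebra_simps)
qed

lemma deriv_E:
  fixes z z' :: "real \<Rightarrow> real^'d \<Rightarrow> real"
  assumes t: "t > 0" and zL: "\<And>y. y > 0 \<Longrightarrow> L2 \<Omega> (z y)" and z'L: "L2 \<Omega> (z' t)"
    and lim: "((\<lambda>s. nrm \<Omega> (\<lambda>x. (z s x - z t x) / (s - t) - z' t x)) \<longlongrightarrow> 0) (at t)"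
  shows "((\<lambda>y. ip \<Omega> (z y) (z y)) has_real_derivative 2 * ip \<Omega> (z' t) (z t)) (at t)"
proof -
  define q where "q y = (\<lambda>x. (z y x - z t x) / (y - t) - z' t x)" for y
  have ztL: "L2 \<Omega> (z t)" using zL t by simp
  have ev: "eventually (\<lambda>y. y > 0 \<and> y \<noteq> t) (at t)"
  proof -
    have "eventually (\<lambda>y. y > 0) (at t)"
      using order_tendstoD(1)[OF tendsto_ident_at t] by simp
    moreover have "eventually (\<lambda>y. y \<noteq> t) (at t)" by (simp add: eventually_at_filter)
    ultimately show ?thesis by eventually_elim simp
  qed
  have qL: "L2 \<Omega> (q y)" if "y > 0" for y
  proof -
    have "L2 \<Omega> (\<lambda>x. (1 / (y - t)) * z y x + (- 1 / (y - t)) * z t x)" using zL[OF that] ztL by (rule L2_lin)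
    then have "L2 \<Omega> (\<lambda>x. (z y x - z t x) / (y - t))" by (simp add: diff_divide_distrib)
    then show ?thesis unfolding q_def using z'L by (rule L2_diff)
  qed
  define D where "D y = (ip \<Omega> (z y) (z y) - ip \<Omega> (z t) (z t)) / (y - t) - 2 * ip \<Omega> (z' t) (z t)" for y
  have Deq: "D y = 2 * ip \<Omega> (z t) (q y) + (y - t) * ip \<Omega> (\<lambda>x. z' t x + q y x) (\<lambda>x. z' t x + q y x)"
    if y: "y > 0" "y \<noteq> t" for y
  proof -
    let ?g = "\<lambda>x. z' t x + q y x"
    have gL: "L2 \<Omega> ?g" using z'L qL[OF y(1)] by (rule L2_add)
    have zy: "z y = (\<lambda>x. z t x + (y - t) * ?g x)" using y by (auto simp: q_def field_simps)
    have "ip \<Omega> (z y) (z y) = ip \<Omega> (z t) (z t) + 2 * (y - t) * ip \<Omega> (z t) ?g + (y - t)\<^sup>2 * ip \<Omega> ?g ?g"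
      unfolding zy by (rule quad_expand[OF ztL gL])
    moreover have "ip \<Omega> (z t) ?g = ip \<Omega> (z t) (z' t) + ip \<Omega> (z t) (q y)" by (rule ip_add2[OF z'L qL[OF y(1)] ztL])
    ultimately show ?thesis using y by (simp add: D_def power2_eq_square field_simps ip_sym[of \<Omega> "z t" "z' t"])
  qed
  have D0: "(D \<longlongrightarrow> 0) (at t)"
  proof (rule Lim_null_comparison)
    define B where "B y = 2 * (nrm \<Omega> (z t) * nrm \<Omega> (q y)) + \<bar>y - t\<bar> * (nrm \<Omega> (z' t) + nrm \<Omega> (q y))\<^sup>2" for y
    show "eventually (\<lambda>y. norm (D y) \<le> B y) (at t)"
      using ev
    proof eventually_elim
      case (elim y)
      let ?g = "\<lambda>x. z' t x + q y x"
      have c1: "\<bar>ip \<Omega> (z t) (q y)\<bar> \<le> nrm \<Omega> (z t) * nrm \<Omega> (q y)" by (rule CS[OF ztL qL]) (use elim in simp)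
      have c2: "ip \<Omega> ?g ?g \<le> (nrm \<Omega> (z' t) + nrm \<Omega> (q y))\<^sup>2"
      proof -
        have "ip \<Omega> ?g ?g = (nrm \<Omega> ?g)\<^sup>2" by (simp add: nrm_sq)
        also have "\<dots> \<le> (nrm \<Omega> (z' t) + nrm \<Omega> (q y))\<^sup>2"
          using nrm_triangle[OF z'L qL] elim nrm_nonneg by (intro power_mono) auto
        finally show ?thesis .
      qed
      have De: "D y = 2 * ip \<Omega> (z t) (q y) + (y - t) * ip \<Omega> ?g ?g" using Deq[of y] elim by simp
      have "norm (D y) \<le> norm (2 * ip \<Omega> (z t) (q y)) + norm ((y - t) * ip \<Omega> ?g ?g)"
        unfolding De by (rule norm_triangle_ineq)
      also have "\<dots> = 2 * \<bar>ip \<Omega> (z t) (q y)\<bar> + \<bar>y - t\<bar> * ip \<Omega> ?g ?g"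
        using ip_nonneg[of \<Omega> ?g] by (simp add: abs_mult)
      finally have "norm (D y) \<le> 2 * \<bar>ip \<Omega> (z t) (q y)\<bar> + \<bar>y - t\<bar> * ip \<Omega> ?g ?g" .
      also have "\<dots> \<le> B y" unfolding B_def using c1 c2 by (intro add_mono mult_left_mono) auto
      finally show ?case .
    qed
    have q0: "((\<lambda>y. nrm \<Omega> (q y)) \<longlongrightarrow> 0) (at t)" using lim by (simp add: q_def)
    have "(B \<longlongrightarrow> 2 * (nrm \<Omega> (z t) * 0) + \<bar>t - t\<bar> * (nrm \<Omega> (z' t) + 0)\<^sup>2) (at t)"
      unfolding B_def by (intro tendsto_intros q0)
    then show "(B \<longlongrightarrow> 0) (at t)" by simp
  qed
  have "((\<lambda>y. D y + 2 * ip \<Omega> (z' t) (z t)) \<longlongrightarrow> 0 + 2 * ip \<Omega> (z' t) (z t)) (at t)"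
    by (intro tendsto_intros D0)
  then have "((\<lambda>y. (ip \<Omega> (z y) (z y) - ip \<Omega> (z t) (z t)) / (y - t)) \<longlongrightarrow> 2 * ip \<Omega> (z' t) (z t)) (at t)"
    by (simp add: D_def)
  then show ?thesis by (simp add: has_field_derivative_iff)
qed



lemma energy_decay:
  fixes E :: "real \<Rightarrow> real" and w :: real
  assumes der: "\<And>t. t > 0 \<Longrightarrow> \<exists>D. (E has_real_derivative D) (at t) \<and> D \<le> - 2 * w * E t"
    and cont0: "(E \<longlongrightarrow> E 0) (at_right 0)"
    and T: "T \<ge> 0"
  shows "E T \<le> exp (- 2 * w * T) * E 0"
proof -
  define F where "F t = exp (2 * w * t) * E t" for t
  have derF: "\<exists>y. (F has_real_derivative y) (at t) \<and> y \<le> 0" if tp: "t > 0" for t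
  proof -
    obtain D where D: "(E has_real_derivative D) (at t)" "D \<le> - 2 * w * E t" using der[OF tp] by blast
    have "(F has_real_derivative exp (2 * w * t) * (2 * w) * E t + exp (2 * w * t) * D) (at t)"
      unfolding F_def[abs_def] by (auto intro!: derivative_eq_intros D(1))
    moreover have "exp (2 * w * t) * (2 * w) * E t + exp (2 * w * t) * D \<le> 0"
    proof -
      have "exp (2 * w * t) * (2 * w) * E t + exp (2 * w * t) * D = exp (2 * w * t) * (2 * w * E t + D)"
        by (simp add: algebra_simps)
      also have "\<dots> \<le> 0" using D(2) by (intro mult_nonneg_nonpos) auto
      finally show ?thesis .
    qed
    ultimately show ?thesis by blast
  qed
  have contF: "continuous_on {0..T} F"
    unfolding continuous_on_eq_continuous_within
  proof
    fix t assume t: "t \<in> {0..T}"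
    show "continuous (at t within {0..T}) F"
    proof (cases "t = 0")
      case False
      with t have "t > 0" by simp
      then obtain y where "(F has_real_derivative y) (at t)" using derF by blast
      then have "isCont F t" by (rule DERIV_isCont)
      then show ?thesis by (rule continuous_at_imp_continuous_at_within)
    next
      case True
      have "(F \<longlongrightarrow> exp (2 * w * 0) * E 0) (at_right 0)"
        unfolding F_def[abs_def] by (intro tendsto_intros cont0)
      then have l: "(F \<longlongrightarrow> F 0) (at 0 within {0<..})" by (simp add: F_def)
      have "at 0 within {0..T} = at 0 within ({0..T} - {0})" by (simp add: at_within_def)
      moreover have "(F \<longlongrightarrow> F 0) (at 0 within ({0..T} - {0}))"
        by (rule tendsto_within_subset[OF l]) auto
      ultimately have "(F \<longlongrightarrow> F 0) (at 0 within {0..T})" by simp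
      then show ?thesis using True by (simp add: continuous_within)
    qed
  qed
  have "F T \<le> F 0"
    using DERIV_nonpos_imp_decreasing_open[OF T _ contF] derF by auto
  then have "exp (2 * w * T) * E T \<le> E 0" by (simp add: F_def)
  then have "exp (- 2 * w * T) * (exp (2 * w * T) * E T) \<le> exp (- 2 * w * T) * E 0"
    by (intro mult_left_mono) auto
  then show ?thesis by (simp add: mult.assoc[symmetric] exp_add[symmetric])
qed



theorem mainTheorem15:
  fixes \<Omega> Obs :: "(real^'d) set"
    and \<eta> \<nu>0 Ca s0 h0 \<omega>P MP \<omega> :: real
    and v :: "real^'d"
    and fs ys z0 :: "real^'d \<Rightarrow> real"
    and V :: "real \<Rightarrow> (real^'d \<Rightarrow> real) set"
    and P :: "real \<Rightarrow> (real^'d \<Rightarrow> real) \<Rightarrow> (real^'d \<Rightarrow> real)"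
  assumes dim: "CARD('d) \<in> {1, 2, 3}"
    and dom: "open \<Omega>" "bounded \<Omega>" "\<Omega> \<noteq> {}" "smooth_boundary \<Omega>"
    and eta: "\<eta> > 0"
    and fs: "L2 \<Omega> fs"
    and obs: "open Obs" "Obs \<noteq> {}" "Obs \<subseteq> \<Omega>"
    and ys: "H2 \<Omega> ys" "H10 \<Omega> ys"
      "\<forall>\<phi>. test_fun \<Omega> \<phi> \<longrightarrow>
         \<eta> * (\<Sum>i\<in>UNIV. ip \<Omega> (wgrad \<Omega> ys i) (pd i \<phi>)) + ip \<Omega> (\<lambda>x. ys x * vgrad \<Omega> v ys x) \<phi>
         + \<nu>0 * ip \<Omega> ys \<phi> = ip \<Omega> fs \<phi>"
    and s0: "\<forall>z. H1 \<Omega> z \<longrightarrow> integrable (lebesgue_on \<Omega>) (\<lambda>x. (z x) ^ 4) \<and>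
                 L4norm \<Omega> z \<le> s0 * H1norm \<Omega> z"
    and Ca: "\<forall>z. H2 \<Omega> z \<and> H10 \<Omega> z \<longrightarrow>
                 (AE x in lebesgue_on \<Omega>. \<bar>z x\<bar> \<le> Ca * sqrt (H1norm \<Omega> z) * sqrt (H2norm \<Omega> z))"
    and nuhat: "\<nu>0 - (norm v)\<^sup>2 / \<eta> * (Ca\<^sup>2 + s0 ^ 4) * (H2norm \<Omega> ys)\<^sup>2 > 0"
    and h0: "h0 > 0" and \<omega>P: "\<omega>P > 0" and MP: "MP > 0"
    and Vh: "\<forall>h. 0 < h \<and> h < h0 \<longrightarrow>
               (\<exists>Bs. finite Bs \<and> (\<forall>b\<in>Bs. H10 \<Omega> b) \<and> V h = fspan Bs)"
    and proj_approx: "\<exists>C. \<forall>h. 0 < h \<and> h < h0 \<longrightarrow> (\<forall>w. H2 \<Omega> w \<and> H10 \<Omega> w \<longrightarrow>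
               nrm \<Omega> (\<lambda>x. w x - proj \<Omega> (V h) w x) \<le> C * h\<^sup>2 * H2norm \<Omega> w \<and>
               sqrt (\<Sum>i\<in>UNIV. (nrm \<Omega> (wgrad \<Omega> (\<lambda>x. w x - proj \<Omega> (V h) w x) i))\<^sup>2)
                 \<le> C * h * H2norm \<Omega> w)"
    and P_ric: "\<forall>h. 0 < h \<and> h < h0 \<longrightarrow>
               (\<forall>z\<in>V h. P h z \<in> V h) \<and>
               (\<forall>z\<in>V h. \<forall>w\<in>V h. \<forall>c d. P h (\<lambda>x. c * z x + d * w x) = (\<lambda>x. c * P h z x + d * P h w x)) \<and>
               (\<forall>z\<in>V h. \<forall>w\<in>V h. ip \<Omega> (P h z) w = ip \<Omega> z (P h w)) \<and>
               (\<forall>z\<in>V h. ip \<Omega> (P h z) z \<ge> 0) \<and>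
               (\<forall>z\<in>V h. nrm \<Omega> (riccati_res \<Omega> (V h) (a_form \<Omega> \<eta> v \<nu>0 ys) \<omega> Obs (P h) z) = 0)"
    and A2: "\<forall>h. 0 < h \<and> h < h0 \<longrightarrow> (\<forall>\<phi>\<in>V h.
               ip \<Omega> (closed_loop \<Omega> (V h) (a_form \<Omega> \<eta> v \<nu>0 ys) \<omega> Obs (P h) \<phi>) \<phi>
                 \<le> - \<omega>P * (nrm \<Omega> \<phi>)\<^sup>2)"
    and \<omega>: "\<omega> > 0"
    and z0: "L2 \<Omega> z0"
  shows "\<exists>C>0. \<forall>h. 0 < h \<and> h < h0 \<longrightarrow>
           (\<forall>z z'. ((\<forall>t\<ge>0. z t \<in> V h) \<and>
                    ((\<lambda>s. nrm \<Omega> (\<lambda>x. z s x - z 0 x)) \<longlongrightarrow> 0) (at_right 0) \<and>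
                    (\<forall>t>0. z' t \<in> V h \<and>
                       ((\<lambda>s. nrm \<Omega> (\<lambda>x. (z s x - z t x) / (s - t) - z' t x)) \<longlongrightarrow> 0) (at t)) \<and>
                    (\<forall>t>0. \<forall>\<phi>\<in>V h.
                       ip \<Omega> (z' t) \<phi> + exp (- \<omega> * t) * ip \<Omega> (\<lambda>x. z t x * vgrad \<Omega> v (z t) x) \<phi>
                       = ip \<Omega> (closed_loop \<Omega> (V h) (a_form \<Omega> \<eta> v \<nu>0 ys) \<omega> Obs (P h) (z t)) \<phi>) \<and>
                    nrm \<Omega> (\<lambda>x. z 0 x - proj \<Omega> (V h) z0 x) = 0)
              \<longrightarrow> (\<forall>t\<ge>0. nrm \<Omega> (z t) \<le> C * exp (- \<omega>P * t) * nrm \<Omega> z0))"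
proof (rule exI[of _ 1], intro conjI allI impI)
  show "(0::real) < 1" by simp
next
  fix h and z z' :: "real \<Rightarrow> real^'d \<Rightarrow> real" and t :: real
  assume hh: "0 < h \<and> h < h0"
  assume prem: "(\<forall>t\<ge>0. z t \<in> V h) \<and>
                    ((\<lambda>s. nrm \<Omega> (\<lambda>x. z s x - z 0 x)) \<longlongrightarrow> 0) (at_right 0) \<and>
                    (\<forall>t>0. z' t \<in> V h \<and>
                       ((\<lambda>s. nrm \<Omega> (\<lambda>x. (z s x - z t x) / (s - t) - z' t x)) \<longlongrightarrow> 0) (at t)) \<and>
                    (\<forall>t>0. \<forall>\<phi>\<in>V h.
                       ip \<Omega> (z' t) \<phi> + exp (- \<omega> * t) * ip \<Omega> (\<lambda>x. z t x * vgrad \<Omega> v (z t) x) \<phi>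
                       = ip \<Omega> (closed_loop \<Omega> (V h) (a_form \<Omega> \<eta> v \<nu>0 ys) \<omega> Obs (P h) (z t)) \<phi>) \<and>
                    nrm \<Omega> (\<lambda>x. z 0 x - proj \<Omega> (V h) z0 x) = 0"
  assume t0: "0 \<le> t"
  from prem have zV: "\<And>t. t \<ge> 0 \<Longrightarrow> z t \<in> V h"
    and zcont: "((\<lambda>s. nrm \<Omega> (\<lambda>x. z s x - z 0 x)) \<longlongrightarrow> 0) (at_right 0)"
    and z'V: "\<And>t. t > 0 \<Longrightarrow> z' t \<in> V h"
    and zder: "\<And>t. t > 0 \<Longrightarrow> ((\<lambda>s. nrm \<Omega> (\<lambda>x. (z s x - z t x) / (s - t) - z' t x)) \<longlongrightarrow> 0) (at t)"
    and ode: "\<And>t \<phi>. t > 0 \<Longrightarrow> \<phi> \<in> V h \<Longrightarrow>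
        ip \<Omega> (z' t) \<phi> + exp (- \<omega> * t) * ip \<Omega> (\<lambda>x. z t x * vgrad \<Omega> v (z t) x) \<phi>
        = ip \<Omega> (closed_loop \<Omega> (V h) (a_form \<Omega> \<eta> v \<nu>0 ys) \<omega> Obs (P h) (z t)) \<phi>"
    and zinit: "nrm \<Omega> (\<lambda>x. z 0 x - proj \<Omega> (V h) z0 x) = 0"
    by auto
  obtain Bs where Bs: "finite Bs" "\<forall>b\<in>Bs. H10 \<Omega> b" "V h = fspan Bs"
    using Vh hh by blast
  have BL: "\<And>b. b \<in> Bs \<Longrightarrow> L2 \<Omega> b"
    using Bs(2) by (intro wgrad_fL2[OF wgrad_works[OF H10_H1]]) auto
  have VL: "\<And>u. u \<in> V h \<Longrightarrow> L2 \<Omega> u" unfolding Bs(3) by (rule fspan_L2[OF Bs(1) BL])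
  have zL: "\<And>t. t \<ge> 0 \<Longrightarrow> L2 \<Omega> (z t)" using zV VL by blast
  have z'L: "\<And>t. t > 0 \<Longrightarrow> L2 \<Omega> (z' t)" using z'V VL by blast
  have N0: "ip \<Omega> (\<lambda>x. z t x * vgrad \<Omega> v (z t) x) (z t) = 0" if tp: "t > 0" for t
  proof -
    have "z t \<in> fspan Bs" using zV[of t] tp Bs(3) by simp
    then obtain c where c: "z t = (\<lambda>x. \<Sum>b\<in>Bs. c b * b x)" by (auto simp: fspan_iff)
    show ?thesis by (rule cancel[OF dom(1,2) s0 Bs(1,2) c])
  qed
  define E where "E t = ip \<Omega> (z t) (z t)" for t
  have der: "\<exists>D. (E has_real_derivative D) (at t) \<and> D \<le> - 2 * \<omega>P * E t" if tp: "t > 0" for t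
  proof (intro exI conjI)
    show "(E has_real_derivative 2 * ip \<Omega> (z' t) (z t)) (at t)"
    proof -
      have zL': "\<And>y. 0 < y \<Longrightarrow> L2 \<Omega> (z y)" using zL by simp
      show ?thesis unfolding E_def[abs_def] by (rule deriv_E[where z=z and z'=z' and \<Omega>=\<Omega> and t=t, OF tp zL' z'L[OF tp] zder[OF tp]])
    qed
    have "ip \<Omega> (z' t) (z t) + exp (- \<omega> * t) * ip \<Omega> (\<lambda>x. z t x * vgrad \<Omega> v (z t) x) (z t)
        = ip \<Omega> (closed_loop \<Omega> (V h) (a_form \<Omega> \<eta> v \<nu>0 ys) \<omega> Obs (P h) (z t)) (z t)"
      using ode[OF tp zV] tp by simp
    then have "ip \<Omega> (z' t) (z t) = ip \<Omega> (closed_loop \<Omega> (V h) (a_form \<Omega> \<eta> v \<nu>0 ys) \<omega> Obs (P h) (z t)) (z t)"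
      using N0[OF tp] by simp
    also have "\<dots> \<le> - \<omega>P * (nrm \<Omega> (z t))\<^sup>2" using A2 hh zV[of t] tp by auto
    finally show "2 * ip \<Omega> (z' t) (z t) \<le> - 2 * \<omega>P * E t" by (simp add: E_def nrm_sq)
  qed
  have cont0: "(E \<longlongrightarrow> E 0) (at_right 0)"
  proof -
    have ev: "eventually (\<lambda>s. s > 0) (at_right (0::real))" by (rule eventually_at_right_less)
    have "((\<lambda>s. nrm \<Omega> (z s) - nrm \<Omega> (z 0)) \<longlongrightarrow> 0) (at_right 0)"
    proof (rule Lim_null_comparison)
      show "eventually (\<lambda>s. norm (nrm \<Omega> (z s) - nrm \<Omega> (z 0)) \<le> nrm \<Omega> (\<lambda>x. z s x - z 0 x)) (at_right 0)"
        using ev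
      proof eventually_elim
        case (elim s)
        have "L2 \<Omega> (z s)" "L2 \<Omega> (z 0)" using zL elim by auto
        from nrm_rev_triangle[OF this] show ?case by simp
      qed
      show "((\<lambda>s. nrm \<Omega> (\<lambda>x. z s x - z 0 x)) \<longlongrightarrow> 0) (at_right 0)" by (rule zcont)
    qed
    then have "((\<lambda>s. (nrm \<Omega> (z s) - nrm \<Omega> (z 0)) + nrm \<Omega> (z 0)) \<longlongrightarrow> 0 + nrm \<Omega> (z 0)) (at_right 0)"
      by (intro tendsto_intros)
    then have "((\<lambda>s. nrm \<Omega> (z s)) \<longlongrightarrow> nrm \<Omega> (z 0)) (at_right 0)" by simp
    then have "((\<lambda>s. (nrm \<Omega> (z s))\<^sup>2) \<longlongrightarrow> (nrm \<Omega> (z 0))\<^sup>2) (at_right 0)" by (intro tendsto_intros)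
    then show ?thesis by (simp add: E_def[abs_def] nrm_sq)
  qed
  have Edec: "E t \<le> exp (- 2 * \<omega>P * t) * E 0" by (rule energy_decay[OF der cont0 t0])
  have z0L: "L2 \<Omega> (z 0)" using zL by simp
  have pL: "L2 \<Omega> (proj \<Omega> (V h) z0)"
    using proj_props[OF Bs(1) BL z0] Bs(3) fspan_L2[OF Bs(1) BL] by auto
  have nz0: "nrm \<Omega> (z 0) \<le> nrm \<Omega> z0"
  proof -
    have "nrm \<Omega> (z 0) = nrm \<Omega> (\<lambda>x. (z 0 x - proj \<Omega> (V h) z0 x) + proj \<Omega> (V h) z0 x)" by simp
    also have "\<dots> \<le> nrm \<Omega> (\<lambda>x. z 0 x - proj \<Omega> (V h) z0 x) + nrm \<Omega> (proj \<Omega> (V h) z0)"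
      by (rule nrm_triangle[OF L2_diff[OF z0L pL] pL])
    also have "\<dots> = nrm \<Omega> (proj \<Omega> (V h) z0)" using zinit by simp
    also have "\<dots> \<le> nrm \<Omega> z0" unfolding Bs(3) by (rule proj_nrm[OF Bs(1) BL z0])
    finally show ?thesis .
  qed
  have "(nrm \<Omega> (z t))\<^sup>2 \<le> exp (- 2 * \<omega>P * t) * (nrm \<Omega> (z 0))\<^sup>2"
    using Edec by (simp add: E_def nrm_sq)
  also have "\<dots> = (exp (- \<omega>P * t) * nrm \<Omega> (z 0))\<^sup>2"
    by (simp add: power_mult_distrib exp_double[symmetric] power2_eq_square exp_add[symmetric])
  finally have sq: "(nrm \<Omega> (z t))\<^sup>2 \<le> (exp (- \<omega>P * t) * nrm \<Omega> (z 0))\<^sup>2" .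
  have "nrm \<Omega> (z t) \<le> exp (- \<omega>P * t) * nrm \<Omega> (z 0)"
  proof (rule power2_le_imp_le[OF sq])
    show "0 \<le> exp (- \<omega>P * t) * nrm \<Omega> (z 0)" using nrm_nonneg[of \<Omega> "z 0"] by simp
  qed
  also have "\<dots> \<le> exp (- \<omega>P * t) * nrm \<Omega> z0" using nz0 by (intro mult_left_mono) auto
  finally show "nrm \<Omega> (z t) \<le> 1 * exp (- \<omega>P * t) * nrm \<Omega> z0" by simp
qed


end
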